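(* Let $Y$ be a reflexive Banach space with dual $Y^*$. Assume: (i) $A\colon Y\to Y^*$ is pseudomonotone and $m$-strongly monotone for some $m>0$; (ii) $E\subset Y$ is nonempty, closed and convex; (iii) $\varphi\colon Y\to\mathbb{R}$ is convex and lower semicontinuous; (iv) $g\in Y^*$; (v) for each $n\in\mathbb{N}$, $E_n\subset Y$ is nonempty, closed and convex, and $E_n\to E$ in the sense of Mosco; (vi) $g_n\in Y^*$ and $g_n\to g$ in $Y^*$. Then for each $n$ there is a unique $u_n\in E_n$ with $$\langle Au_n-g_n,z-u_n\rangle+\varphi(z)-\varphi(u_n)\ge0\quad\text{for all } z\in E_n,$$ there is a unique $u\in E$ with $$\langle Au-g,z-u\rangle+\varphi(z)-\varphi(u)\ge0\quad\text{for all } z\in E,$$ and $u_n\to u$ strongly in $Y$ as $n\to\infty$.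
   Context: Pseudomonotone: $A$ is bounded (maps bounded sets to bounded sets) and, whenever $u_n\to u$ weakly in $Y$ and $\limsup_n\langle Au_n,u_n-u\rangle\le 0$, one has $\langle Au,u-v\rangle\le\liminf_n\langle Au_n,u_n-v\rangle$ for all $v\in Y$. $m$-strongly monotone: $\langle Av_1-Av_2,v_1-v_2\rangle\ge m\|v_1-v_2\|^2$ for all $v_1,v_2$. Mosco convergence: a sequence $\{C_n\}$ of closed convex subsets of a normed space $Y$ converges in the Mosco sense to a closed convex set $C\subset Y$ if (m1) whenever $n_k\to\infty$, $z_k\in C_{n_k}$ and $z_k\to z$ weakly in $Y$, then $z\in C$; and (m2) for every $z\in C$ there exist $z_n\in C_n$ with $z_n\to z$ strongly in $Y$. *)

theory Defs
  imports "HOL-Analysis.Analysis"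
begin

text \<open>The dual space of Y is modelled as the space of bounded linear functionals
  Y \<Rightarrow>L real (a Banach space with the operator norm); the duality pairing
  is function application.\<close>

definition reflexive_space :: "'a::real_normed_vector itself \<Rightarrow> bool" where
  "reflexive_space _ \<longleftrightarrow>
     (\<forall>\<Phi> :: ('a \<Rightarrow>\<^sub>L real) \<Rightarrow>\<^sub>L real. \<exists>y::'a. \<forall>f. blinfun_apply \<Phi> f = blinfun_apply f y)"

definition weakly_conv :: "(nat \<Rightarrow> 'a::real_normed_vector) \<Rightarrow> 'a \<Rightarrow> bool" where
  "weakly_conv x l \<longleftrightarrow> (\<forall>f :: 'a \<Rightarrow>\<^sub>L real. (\<lambda>n. blinfun_apply f (x n)) \<longlonglongrightarrow> blinfun_apply f l)"

definition bounded_operator :: "('a::real_normed_vector \<Rightarrow> 'b::real_normed_vector) \<Rightarrow> bool" where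
  "bounded_operator A \<longleftrightarrow> (\<forall>S. bounded S \<longrightarrow> bounded (A ` S))"

definition pseudomonotone :: "('a::real_normed_vector \<Rightarrow> ('a \<Rightarrow>\<^sub>L real)) \<Rightarrow> bool" where
  "pseudomonotone A \<longleftrightarrow> bounded_operator A \<and>
     (\<forall>un u. weakly_conv un u \<and>
        limsup (\<lambda>n. ereal (blinfun_apply (A (un n)) (un n - u))) \<le> 0 \<longrightarrow>
        (\<forall>v. ereal (blinfun_apply (A u) (u - v)) \<le> liminf (\<lambda>n. ereal (blinfun_apply (A (un n)) (un n - v)))))"

definition strongly_monotone :: "real \<Rightarrow> ('a::real_normed_vector \<Rightarrow> ('a \<Rightarrow>\<^sub>L real)) \<Rightarrow> bool" where
  "strongly_monotone m A \<longleftrightarrow>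
     (\<forall>v1 v2. blinfun_apply (A v1 - A v2) (v1 - v2) \<ge> m * (norm (v1 - v2))\<^sup>2)"

definition lower_semicont :: "('a::topological_space \<Rightarrow> real) \<Rightarrow> bool" where
  "lower_semicont f \<longleftrightarrow> (\<forall>x. \<forall>e>0. \<forall>\<^sub>F y in at x. f x - e < f y)"

definition mosco_conv :: "(nat \<Rightarrow> 'a::real_normed_vector set) \<Rightarrow> 'a set \<Rightarrow> bool" where
  "mosco_conv Cn C \<longleftrightarrow>
     (\<forall>nk z zl. filterlim nk at_top sequentially \<and> (\<forall>k. z k \<in> Cn (nk k)) \<and> weakly_conv z zl
        \<longrightarrow> zl \<in> C) \<and>
     (\<forall>z\<in>C. \<exists>zn. (\<forall>n. zn n \<in> Cn n) \<and> zn \<longlonglongrightarrow> z)"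

definition solves_VI :: "('a::real_normed_vector \<Rightarrow> ('a \<Rightarrow>\<^sub>L real)) \<Rightarrow> ('a \<Rightarrow>\<^sub>L real)
    \<Rightarrow> ('a \<Rightarrow> real) \<Rightarrow> 'a set \<Rightarrow> 'a \<Rightarrow> bool" where
  "solves_VI A g \<phi> C u \<longleftrightarrow> u \<in> C \<and>
     (\<forall>z\<in>C. blinfun_apply (A u - g) (z - u) + \<phi> z - \<phi> u \<ge> 0)"

end

theory Submission
  imports Defs "HOL-Library.Function_Algebras" "HOL-Library.Diagonal_Subsequence"
begin
instantiation "fun" :: (type, real_vector) real_vector
begin
definition scaleR_fun :: "real \<Rightarrow> ('a \<Rightarrow> 'b) \<Rightarrow> 'a \<Rightarrow> 'b" where
  "scaleR_fun r f = (\<lambda>x. r *\<^sub>R f x)"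
instance by standard (auto simp: scaleR_fun_def plus_fun_def fun_eq_iff scaleR_add_right scaleR_add_left)
end

definition sublin :: "('v::real_vector \<Rightarrow> real) \<Rightarrow> bool" where
  "sublin p \<longleftrightarrow> (\<forall>x y. p (x + y) \<le> p x + p y) \<and> (\<forall>r x. r \<ge> 0 \<longrightarrow> p (r *\<^sub>R x) = r * p x)"

definition lin_graph :: "('v::real_vector \<Rightarrow> real) \<Rightarrow> ('v \<times> real) set \<Rightarrow> bool" where
  "lin_graph p G \<longleftrightarrow> (\<forall>x y y'. (x,y)\<in>G \<longrightarrow> (x,y')\<in>G \<longrightarrow> y = y') \<and> (0,0) \<in> G \<and>
     (\<forall>x y x' y'. (x,y)\<in>G \<longrightarrow> (x',y')\<in>G \<longrightarrow> (x+x', y+y')\<in>G) \<and>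
     (\<forall>x y r. (x,y)\<in>G \<longrightarrow> (r *\<^sub>R x, r*y) \<in> G) \<and> (\<forall>x y. (x,y)\<in>G \<longrightarrow> y \<le> p x)"

lemma sublin_0: "sublin p \<Longrightarrow> p 0 = 0"
  unfolding sublin_def by (metis mult_zero_left order_refl scaleR_zero_left)

lemma lin_graph_union:
  assumes "C \<in> chains {G. lin_graph p G \<and> G0 \<subseteq> G}" "C \<noteq> {}"
  shows "lin_graph p (\<Union>C)"
proof -
  have ch: "\<And>A B. A \<in> C \<Longrightarrow> B \<in> C \<Longrightarrow> A \<subseteq> B \<or> B \<subseteq> A" and lg: "\<And>A. A \<in> C \<Longrightarrow> lin_graph p A"
    using assms unfolding chains_def chain_subset_def by auto
  have two: "\<exists>G\<in>C. a \<in> G \<and> b \<in> G" if "a \<in> \<Union>C" "b \<in> \<Union>C" for a b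
    using that ch by blast
  show ?thesis
    unfolding lin_graph_def
  proof (intro conjI allI impI)
    show "(0,0) \<in> \<Union>C" using assms(2) lg unfolding lin_graph_def by blast
  next
    fix x y y' assume "(x,y) \<in> \<Union>C" "(x,y') \<in> \<Union>C"
    then obtain G where "G \<in> C" "(x,y) \<in> G" "(x,y') \<in> G" using two by blast
    then show "y = y'" using lg unfolding lin_graph_def by blast
  next
    fix x y x' y' assume "(x,y) \<in> \<Union>C" "(x',y') \<in> \<Union>C"
    then obtain G where "G \<in> C" "(x,y) \<in> G" "(x',y') \<in> G" using two by blast
    then show "(x+x', y+y') \<in> \<Union>C" using lg unfolding lin_graph_def by blast
  next
    fix x y r assume "(x,y) \<in> \<Union>C"
    then obtain G where "G \<in> C" "(x,y) \<in> G" by blast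
    then show "(r *\<^sub>R x, r*y) \<in> \<Union>C" using lg unfolding lin_graph_def by blast
  next
    fix x y assume "(x,y) \<in> \<Union>C"
    then obtain G where "G \<in> C" "(x,y) \<in> G" by blast
    then show "y \<le> p x" using lg unfolding lin_graph_def by blast
  qed
qed

lemma lin_graph_extend:
  assumes p: "sublin p" and M: "lin_graph p M" and x0: "x0 \<notin> fst ` M"
  shows "\<exists>G'. lin_graph p G' \<and> M \<subseteq> G' \<and> G' \<noteq> M"
proof -
  have fnl: "\<And>x y y'. (x,y)\<in>M \<Longrightarrow> (x,y')\<in>M \<Longrightarrow> y = y'" and z: "(0,0)\<in>M"
    and add: "\<And>x y x' y'. (x,y)\<in>M \<Longrightarrow> (x',y')\<in>M \<Longrightarrow> (x+x', y+y')\<in>M"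
    and sc: "\<And>x y r. (x,y)\<in>M \<Longrightarrow> (r *\<^sub>R x, r*y) \<in> M"
    and dom: "\<And>x y. (x,y)\<in>M \<Longrightarrow> y \<le> p x"
    using M unfolding lin_graph_def by blast+
  have padd: "\<And>x y. p (x+y) \<le> p x + p y" and phom: "\<And>r x. r \<ge> 0 \<Longrightarrow> p (r *\<^sub>R x) = r * p x"
    using p unfolding sublin_def by auto
  define L where "L = {y - p (x - x0) | x y. (x,y) \<in> M}"
  have bd: "l \<le> p (x' + x0) - y'" if "l \<in> L" "(x',y') \<in> M" for l x' y'
  proof -
    obtain x y where l: "l = y - p (x - x0)" "(x,y) \<in> M" using \<open>l \<in> L\<close> unfolding L_def by blast
    have "(x + x', y + y') \<in> M" using add l(2) that(2) by blast
    then have "y + y' \<le> p (x + x')" using dom by blast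
    also have "\<dots> = p ((x - x0) + (x' + x0))" by (simp add: algebra_simps)
    also have "\<dots> \<le> p (x - x0) + p (x' + x0)" by (rule padd)
    finally show ?thesis using l by simp
  qed
  have Lne: "L \<noteq> {}" using z unfolding L_def by blast
  have Lbdd: "bdd_above L" using bd z unfolding bdd_above_def by blast
  define c where "c = Sup L"
  have c1: "c \<le> p (x' + x0) - y'" if "(x',y') \<in> M" for x' y'
    unfolding c_def using Lne bd that by (intro cSup_least) auto
  have c2: "y - p (x - x0) \<le> c" if "(x,y) \<in> M" for x y
    unfolding c_def using Lbdd that by (intro cSup_upper) (auto simp: L_def)
  define G' where "G' = {(x + a *\<^sub>R x0, y + a * c) | x y a. (x,y) \<in> M}"
  have x0M: "a = 0" if "(x, y) \<in> M" "a *\<^sub>R x0 = x" for a x y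
  proof (rule ccontr)
    assume "a \<noteq> 0"
    then have "((1/a) *\<^sub>R x, (1/a) * y) \<in> M" using sc that(1) by blast
    moreover have "(1/a) *\<^sub>R x = x0" using that(2) \<open>a \<noteq> 0\<close> by auto
    ultimately show False using x0 by force
  qed
  have "lin_graph p G'"
    unfolding lin_graph_def
  proof (intro conjI allI impI)
    fix x y y' assume "(x,y) \<in> G'" "(x,y') \<in> G'"
    then obtain x1 y1 a1 x2 y2 a2 where e: "(x1,y1)\<in>M" "(x2,y2)\<in>M" "x = x1 + a1 *\<^sub>R x0" "x = x2 + a2 *\<^sub>R x0"
      "y = y1 + a1 * c" "y' = y2 + a2 * c" unfolding G'_def by blast
    have "(x1 + (-1) *\<^sub>R x2, y1 + (-1) * y2) \<in> M" using add sc e by blast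
    moreover have "(a2 - a1) *\<^sub>R x0 = x1 + (-1) *\<^sub>R x2" using e(3,4) by (simp add: algebra_simps)
    ultimately have "a2 - a1 = 0" using x0M by blast
    then have "a1 = a2" "x1 = x2" using e by auto
    then show "y = y'" using e fnl by auto
  next
    show "(0,0) \<in> G'" unfolding G'_def using z by force
  next
    fix x y x' y' assume "(x,y) \<in> G'" "(x',y') \<in> G'"
    then obtain x1 y1 a1 x2 y2 a2 where e: "(x1,y1)\<in>M" "(x2,y2)\<in>M" "x = x1 + a1 *\<^sub>R x0" "x' = x2 + a2 *\<^sub>R x0"
      "y = y1 + a1 * c" "y' = y2 + a2 * c" unfolding G'_def by blast
    have "(x1 + x2, y1 + y2) \<in> M" using add e by blast
    moreover have "x + x' = (x1 + x2) + (a1 + a2) *\<^sub>R x0" "y + y' = (y1 + y2) + (a1 + a2) * c"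
      using e by (simp_all add: algebra_simps)
    ultimately show "(x+x', y+y') \<in> G'" unfolding G'_def by blast
  next
    fix x y r assume "(x,y) \<in> G'"
    then obtain x1 y1 a1 where e: "(x1,y1)\<in>M" "x = x1 + a1 *\<^sub>R x0" "y = y1 + a1 * c" unfolding G'_def by blast
    have "(r *\<^sub>R x1, r * y1) \<in> M" using sc e by blast
    moreover have "r *\<^sub>R x = r *\<^sub>R x1 + (r * a1) *\<^sub>R x0" "r * y = r * y1 + (r * a1) * c"
      using e by (simp_all add: algebra_simps)
    ultimately show "(r *\<^sub>R x, r*y) \<in> G'" unfolding G'_def by blast
  next
    fix x y assume "(x,y) \<in> G'"
    then obtain x1 y1 a where e: "(x1,y1)\<in>M" "x = x1 + a *\<^sub>R x0" "y = y1 + a * c" unfolding G'_def by blast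
    consider "a > 0" | "a = 0" | "a < 0" by linarith
    then show "y \<le> p x"
    proof cases
      case 1
      define w where "w = (1/a) *\<^sub>R x1 + x0"
      have "((1/a) *\<^sub>R x1, (1/a) * y1) \<in> M" using sc e by blast
      from c1[OF this] have "a * c \<le> a * (p w - (1/a) * y1)"
        using 1 unfolding w_def by (simp add: mult_left_mono)
      also have "\<dots> = a * p w - y1"
        using 1 by (simp add: right_diff_distrib)
      also have "a * p w = p (a *\<^sub>R w)" using phom[of a w] 1 by simp
      also have "a *\<^sub>R w = x" using 1 e unfolding w_def by (simp add: algebra_simps)
      finally show ?thesis using e by simp
    next
      case 2 then show ?thesis using e dom by simp
    next
      case 3
      define b where "b = - a"
      have b: "b > 0" using 3 b_def by simp
      define w where "w = (1/b) *\<^sub>R x1 - x0"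
      have "((1/b) *\<^sub>R x1, (1/b) * y1) \<in> M" using sc e by blast
      from c2[OF this] have "b * ((1/b) * y1 - p w) \<le> b * c"
        using b unfolding w_def by (simp add: mult_left_mono)
      moreover have "b * ((1/b) * y1 - p w) = y1 - b * p w"
        using b by (simp add: right_diff_distrib)
      moreover have "b * p w = p (b *\<^sub>R w)" using phom[of b w] b by simp
      moreover have "b *\<^sub>R w = x" using b e b_def unfolding w_def by (simp add: algebra_simps)
      ultimately show ?thesis using e b_def by (simp add: algebra_simps)
    qed
  qed
  moreover have "M \<subseteq> G'"
  proof
    fix q assume "q \<in> M"
    then show "q \<in> G'" unfolding G'_def by (cases q) force
  qed
  moreover have "(x0, c) \<in> G'" unfolding G'_def using z by force
  then have "G' \<noteq> M" using x0 by force
  ultimately show ?thesis by blast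
qed

theorem HB1:
  fixes p :: "'v::real_vector \<Rightarrow> real"
  assumes p: "sublin p" and ec: "\<And>a. a * c \<le> p (a *\<^sub>R e)"
  shows "\<exists>F. linear F \<and> F e = c \<and> (\<forall>x. F x \<le> p x)"
proof -
  define G0 where "G0 = {(a *\<^sub>R e, a * c) | a. True}"
  have p0: "p 0 = 0" using sublin_0[OF p] .
  have G0: "lin_graph p G0"
    unfolding lin_graph_def G0_def
  proof (intro conjI allI impI)
    fix x y y' assume "(x, y) \<in> {(a *\<^sub>R e, a * c) |a. True}" "(x, y') \<in> {(a *\<^sub>R e, a * c) |a. True}"
    then obtain a a' where e: "x = a *\<^sub>R e" "y = a * c" "x = a' *\<^sub>R e" "y' = a' * c" by blast
    show "y = y'"
    proof (cases "e = 0")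
      case True
      have "1 * c \<le> 0" "(-1) * c \<le> 0" using ec[of 1] ec[of "-1"] p0 True by auto
      then show ?thesis using e by auto
    next
      case False
      then have "a = a'" using e by (metis scaleR_cancel_right)
      then show ?thesis using e by simp
    qed
  next
    show "(0, 0) \<in> {(a *\<^sub>R e, a * c) |a. True}" by (rule CollectI, rule exI[of _ 0]) simp
  next
    fix x y x' y' assume "(x, y) \<in> {(a *\<^sub>R e, a * c) |a. True}" "(x', y') \<in> {(a *\<^sub>R e, a * c) |a. True}"
    then obtain a a' where e: "x = a *\<^sub>R e" "y = a * c" "x' = a' *\<^sub>R e" "y' = a' * c" by auto
    show "(x + x', y + y') \<in> {(a *\<^sub>R e, a * c) |a. True}"
      by (rule CollectI, rule exI[of _ "a + a'"]) (simp add: e algebra_simps)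
  next
    fix x y r assume "(x, y) \<in> {(a *\<^sub>R e, a * c) |a. True}"
    then obtain a where e: "x = a *\<^sub>R e" "y = a * c" by auto
    show "(r *\<^sub>R x, r * y) \<in> {(a *\<^sub>R e, a * c) |a. True}"
      by (rule CollectI, rule exI[of _ "r * a"]) (simp add: e algebra_simps)
  next
    fix x y assume "(x, y) \<in> {(a *\<^sub>R e, a * c) |a. True}"
    then obtain a where e: "x = a *\<^sub>R e" "y = a * c" by auto
    show "y \<le> p x" using ec[of a] e by simp
  qed
  define A where "A = {G. lin_graph p G \<and> G0 \<subseteq> G}"
  have "\<forall>C\<in>chains A. \<exists>U\<in>A. \<forall>X\<in>C. X \<subseteq> U"
  proof
    fix C assume C: "C \<in> chains A"
    show "\<exists>U\<in>A. \<forall>X\<in>C. X \<subseteq> U"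
    proof (cases "C = {}")
      case True then show ?thesis using G0 unfolding A_def by auto
    next
      case False
      have "lin_graph p (\<Union>C)" using lin_graph_union C False unfolding A_def by blast
      moreover have "G0 \<subseteq> \<Union>C" using C False unfolding A_def chains_def by blast
      ultimately show ?thesis unfolding A_def by blast
    qed
  qed
  from Zorn_Lemma2[OF this] obtain M where M: "M \<in> A" and max: "\<And>X. X \<in> A \<Longrightarrow> M \<subseteq> X \<Longrightarrow> X = M"
    by blast
  have Mlg: "lin_graph p M" and G0M: "G0 \<subseteq> M" using M unfolding A_def by auto
  have full: "x \<in> fst ` M" for x
  proof (rule ccontr)
    assume "x \<notin> fst ` M"
    from lin_graph_extend[OF p Mlg this] obtain G' where "lin_graph p G'" "M \<subseteq> G'" "G' \<noteq> M" by blast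
    then show False using max[of G'] G0M unfolding A_def by blast
  qed
  have fnl: "\<And>x y y'. (x,y)\<in>M \<Longrightarrow> (x,y')\<in>M \<Longrightarrow> y = y'"
    and add: "\<And>x y x' y'. (x,y)\<in>M \<Longrightarrow> (x',y')\<in>M \<Longrightarrow> (x+x', y+y')\<in>M"
    and sc: "\<And>x y r. (x,y)\<in>M \<Longrightarrow> (r *\<^sub>R x, r*y) \<in> M"
    and dom: "\<And>x y. (x,y)\<in>M \<Longrightarrow> y \<le> p x"
    using Mlg unfolding lin_graph_def by blast+
  define F where "F x = (THE y. (x,y) \<in> M)" for x
  have FM: "(x, F x) \<in> M" for x
  proof -
    obtain y where "(x,y) \<in> M" using full[of x] by force
    then have "\<exists>!y. (x,y) \<in> M" using fnl by blast
    then show ?thesis unfolding F_def by (rule theI')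
  qed
  have Feq: "F x = y" if "(x,y) \<in> M" for x y using fnl[OF FM that] .
  have "linear F"
  proof (rule linearI)
    fix x y show "F (x + y) = F x + F y" using Feq[OF add[OF FM FM]] .
  next
    fix r x show "F (r *\<^sub>R x) = r *\<^sub>R F x" using Feq[OF sc[OF FM]] by simp
  qed
  moreover have "F e = c" using Feq[of e c] G0M unfolding G0_def by (metis (mono_tags, lifting) CollectI lambda_one scaleR_one subsetD)
  moreover have "F x \<le> p x" for x using dom[OF FM] .
  ultimately show ?thesis by blast
qed

lemma sublin_norm: "sublin (norm :: 'a::real_normed_vector \<Rightarrow> real)"
  unfolding sublin_def by (auto simp: norm_triangle_ineq)

lemma blinfun_of_linear:
  fixes F :: "'a::real_normed_vector \<Rightarrow> real"
  assumes "linear F" "K \<ge> 0" "\<And>x. F x \<le> K * norm x"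
  shows "\<exists>f::'a \<Rightarrow>\<^sub>L real. blinfun_apply f = F \<and> norm f \<le> K"
proof -
  have ab: "\<bar>F x\<bar> \<le> K * norm x" for x
  proof -
    have "F (-x) \<le> K * norm x" using assms(3)[of "-x"] by simp
    moreover have "F (-x) = - F x" using linear_neg[OF assms(1)] .
    ultimately show ?thesis using assms(3)[of x] by linarith
  qed
  have bl: "bounded_linear F"
  proof (rule bounded_linear_intro[where K=K])
    show "F (x + y) = F x + F y" for x y using linear_add[OF assms(1)] .
    show "F (r *\<^sub>R x) = r *\<^sub>R F x" for r x using linear_scale[OF assms(1)] .
    show "norm (F x) \<le> norm x * K" for x using ab[of x] by (simp add: mult.commute)
  qed
  show ?thesis
    by (rule exI[of _ "Blinfun F"])
       (simp add: bounded_linear_Blinfun_apply[OF bl] norm_blinfun_bound[OF assms(2)] ab)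
qed

lemma norming:
  fixes x :: "'a::real_normed_vector"
  shows "\<exists>f::'a \<Rightarrow>\<^sub>L real. norm f \<le> 1 \<and> blinfun_apply f x = norm x"
proof -
  have "\<exists>F. linear F \<and> F x = norm x \<and> (\<forall>y. F y \<le> norm y)"
  proof (rule HB1[OF sublin_norm])
    show "a * norm x \<le> norm (a *\<^sub>R x)" for a by (simp add: abs_ge_self mult_right_mono)
  qed
  then obtain F where F: "linear F" "F x = norm x" "\<And>y. F y \<le> norm y" by blast
  from blinfun_of_linear[OF F(1), of 1] F(3) obtain f :: "'a \<Rightarrow>\<^sub>L real"
    where "blinfun_apply f = F" "norm f \<le> 1" by auto
  then show ?thesis using F(2) by auto
qed

lemma sep_nonstrict:
  fixes C :: "'a::real_normed_vector set"
  assumes conv: "convex C" and c0: "c0 \<in> C" and r: "r > 0" and far: "\<And>c. c \<in> C \<Longrightarrow> norm (x0 - c) \<ge> r"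
  shows "\<exists>f::'a \<Rightarrow>\<^sub>L real. blinfun_apply f (x0 - c0) = 1 \<and> (\<forall>c\<in>C. blinfun_apply f c \<le> blinfun_apply f x0)"
proof -
  define S where "S y = (\<lambda>(c,t). t + norm (y - t *\<^sub>R (c - c0)) / r) ` (C \<times> {0..})" for y
  define q where "q y = Inf (S y)" for y
  have Sne: "S y \<noteq> {}" for y using c0 unfolding S_def by auto
  have Snn: "s \<ge> 0" if "s \<in> S y" for s y using that r unfolding S_def by auto
  have Sbdd: "bdd_below (S y)" for y using Snn by (meson bdd_below.I)
  have qle: "q y \<le> t + norm (y - t *\<^sub>R (c - c0)) / r" if "c \<in> C" "t \<ge> 0" for y c t
    unfolding q_def by (rule cInf_lower[OF _ Sbdd]) (use that in \<open>auto simp: S_def\<close>)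
  have qge: "q y \<ge> b" if "\<And>c t. c \<in> C \<Longrightarrow> t \<ge> 0 \<Longrightarrow> b \<le> t + norm (y - t *\<^sub>R (c - c0)) / r" for y b
    unfolding q_def by (rule cInf_greatest[OF Sne]) (use that in \<open>auto simp: S_def\<close>)
  have qnn: "q y \<ge> 0" for y by (rule qge) (use r in auto)
  have q0: "q 0 = 0" using qle[OF c0, where y=0 and t=0] qnn[of 0] by simp
  have qnorm: "q y \<le> norm y / r" for y using qle[OF c0, where y=y and t=0] by simp
  have sub: "q (y + y') \<le> q y + q y'" for y y'
  proof -
    have key: "q (y + y') \<le> (t + norm (y - t *\<^sub>R (c - c0)) / r) + (t' + norm (y' - t' *\<^sub>R (c' - c0)) / r)"
      if "c \<in> C" "t \<ge> 0" "c' \<in> C" "t' \<ge> 0" for c t c' t'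
    proof (cases "t + t' = 0")
      case True
      then have "t = 0" "t' = 0" using that by auto
      have "norm (y + y') / r \<le> (norm y + norm y') / r"
        using r by (intro divide_right_mono norm_triangle_ineq) auto
      then show ?thesis using qle[OF c0, where y="y+y'" and t=0] \<open>t = 0\<close> \<open>t' = 0\<close>
        by (simp add: add_divide_distrib)
    next
      case False
      then have tt: "t + t' > 0" using that by auto
      define c'' where "c'' = (t / (t + t')) *\<^sub>R c + (t' / (t + t')) *\<^sub>R c'"
      have "c'' \<in> C" unfolding c''_def
        by (rule convexD[OF conv that(1,3)]) (use that tt in \<open>auto simp: add_divide_distrib[symmetric]\<close>)
      have m1: "(t + t') * (t / (t + t')) = t" "(t + t') * (t' / (t + t')) = t'" using tt by auto
      have "(t + t') *\<^sub>R c'' = t *\<^sub>R c + t' *\<^sub>R c'"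
        unfolding c''_def scaleR_add_right scaleR_scaleR m1 ..
      then have eq: "(t + t') *\<^sub>R (c'' - c0) = t *\<^sub>R (c - c0) + t' *\<^sub>R (c' - c0)"
        by (simp add: algebra_simps)
      have "q (y + y') \<le> (t + t') + norm (y + y' - (t + t') *\<^sub>R (c'' - c0)) / r"
        using qle[OF \<open>c'' \<in> C\<close>, where t="t+t'" and y="y+y'"] tt by simp
      also have "norm (y + y' - (t + t') *\<^sub>R (c'' - c0)) = norm ((y - t *\<^sub>R (c - c0)) + (y' - t' *\<^sub>R (c' - c0)))"
        unfolding eq by (simp add: algebra_simps)
      also have "\<dots> \<le> norm (y - t *\<^sub>R (c - c0)) + norm (y' - t' *\<^sub>R (c' - c0))" by (rule norm_triangle_ineq)
      finally show ?thesis using r by (simp add: add_divide_distrib divide_right_mono)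
    qed
    have "q (y + y') - q y' \<le> q y"
    proof (rule qge)
      fix c and t :: real assume ct: "c \<in> C" "t \<ge> 0"
      have "q (y + y') - (t + norm (y - t *\<^sub>R (c - c0)) / r) \<le> q y'"
      proof (rule qge)
        fix c' and t' :: real assume "c' \<in> C" "t' \<ge> 0"
        from key[OF ct this] show "q (y + y') - (t + norm (y - t *\<^sub>R (c - c0)) / r) \<le> t' + norm (y' - t' *\<^sub>R (c' - c0)) / r"
          by linarith
      qed
      then show "q (y + y') - q y' \<le> t + norm (y - t *\<^sub>R (c - c0)) / r" by linarith
    qed
    then show ?thesis by linarith
  qed
  have hom: "q (s *\<^sub>R y) = s * q y" if "s \<ge> 0" for s y
  proof (cases "s = 0")
    case True then show ?thesis using q0 by simp
  next
    case False
    then have s: "s > 0" using that by auto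
    have "q (s *\<^sub>R y) \<le> s * q y"
    proof -
      have "q (s *\<^sub>R y) / s \<le> q y"
      proof (rule qge)
        fix c and t :: real assume ct: "c \<in> C" "t \<ge> 0"
        have "q (s *\<^sub>R y) \<le> s * t + norm (s *\<^sub>R y - (s * t) *\<^sub>R (c - c0)) / r"
          using qle[OF ct(1), where t="s * t" and y="s *\<^sub>R y"] ct s by simp
        also have "norm (s *\<^sub>R y - (s * t) *\<^sub>R (c - c0)) = s * norm (y - t *\<^sub>R (c - c0))"
        proof -
          have "s *\<^sub>R y - (s * t) *\<^sub>R (c - c0) = s *\<^sub>R (y - t *\<^sub>R (c - c0))" by (simp add: algebra_simps)
          then show ?thesis using s by simp
        qed
        finally show "q (s *\<^sub>R y) / s \<le> t + norm (y - t *\<^sub>R (c - c0)) / r"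
          using s by (simp add: field_simps)
      qed
      then show ?thesis using s by (simp add: field_simps)
    qed
    moreover have "s * q y \<le> q (s *\<^sub>R y)"
    proof -
      have "q y \<le> q (s *\<^sub>R y) / s"
      proof -
        have "q y \<le> (q (s *\<^sub>R y)) / s"
        proof -
          have "s * q y \<le> q (s *\<^sub>R y)"
          proof (rule qge)
            fix c and t :: real assume ct: "c \<in> C" "t \<ge> 0"
            have "q y \<le> t / s + norm (y - (t / s) *\<^sub>R (c - c0)) / r"
              using qle[OF ct(1), where t="t / s" and y=y] ct s by simp
            also have "norm (y - (t / s) *\<^sub>R (c - c0)) = norm (s *\<^sub>R y - t *\<^sub>R (c - c0)) / s"
            proof -
              have "s *\<^sub>R y - t *\<^sub>R (c - c0) = s *\<^sub>R (y - (t / s) *\<^sub>R (c - c0))"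
                using s by (simp add: algebra_simps)
              then show ?thesis using s by simp
            qed
            finally show "s * q y \<le> t + norm (s *\<^sub>R y - t *\<^sub>R (c - c0)) / r"
              using s by (simp add: field_simps)
          qed
          then show ?thesis using s by (simp add: field_simps)
        qed
        then show ?thesis .
      qed
      then show ?thesis using s by (simp add: field_simps)
    qed
    ultimately show ?thesis by linarith
  qed
  have sl: "sublin q" unfolding sublin_def using sub hom by blast
  have qe: "q (x0 - c0) \<ge> 1"
  proof (rule qge)
    fix c and t :: real assume ct: "c \<in> C" "t \<ge> 0"
    show "1 \<le> t + norm (x0 - c0 - t *\<^sub>R (c - c0)) / r"
    proof (cases "t \<ge> 1")
      case True then show ?thesis using r by (simp add: add_increasing2)
    next
      case False
      have "c0 + t *\<^sub>R (c - c0) \<in> C"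
        using convexD[OF conv c0 ct(1), of "1 - t" t] ct False by (simp add: algebra_simps)
      from far[OF this] have "r \<le> norm (x0 - c0 - t *\<^sub>R (c - c0))" by (simp add: algebra_simps)
      then have "1 \<le> norm (x0 - c0 - t *\<^sub>R (c - c0)) / r" using r by simp
      then show ?thesis using ct by simp
    qed
  qed
  have "\<exists>F. linear F \<and> F (x0 - c0) = 1 \<and> (\<forall>x. F x \<le> q x)"
  proof (rule HB1[OF sl])
    fix a :: real
    show "a * 1 \<le> q (a *\<^sub>R (x0 - c0))"
    proof (cases "a \<ge> 0")
      case True then show ?thesis using hom[OF True] mult_left_mono[OF qe True] by simp
    next
      case False then show ?thesis using qnn[of "a *\<^sub>R (x0 - c0)"] by simp
    qed
  qed
  then obtain F where F: "linear F" "F (x0 - c0) = 1" "\<And>x. F x \<le> q x" by blast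
  have "F x \<le> (1/r) * norm x" for x using F(3)[of x] qnorm[of x] by simp
  from blinfun_of_linear[OF F(1) _ this] r obtain f :: "'a \<Rightarrow>\<^sub>L real" where f: "blinfun_apply f = F"
    by auto
  have "blinfun_apply f c \<le> blinfun_apply f x0" if "c \<in> C" for c
  proof -
    have "F (c - c0) \<le> 1" using F(3)[of "c - c0"] qle[OF that, where y="c - c0" and t=1] by simp
    then show ?thesis using F(2) f linear_diff[OF F(1)] by simp
  qed
  then show ?thesis using f F(2) by auto
qed

lemma separation:
  fixes C :: "'a::real_normed_vector set"
  assumes "closed C" "convex C" "x0 \<notin> C"
  shows "\<exists>f::'a \<Rightarrow>\<^sub>L real. \<exists>\<delta>>0. \<forall>c\<in>C. blinfun_apply f c \<le> blinfun_apply f x0 - \<delta>"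
proof (cases "C = {}")
  case True then show ?thesis by (intro exI[of _ 0] exI[of _ 1]) auto
next
  case False
  then obtain c0 where c0: "c0 \<in> C" by blast
  define r where "r = infdist x0 C"
  have r: "r > 0" unfolding r_def using infdist_pos_not_in_closed assms False by blast
  define C2 where "C2 = {c + w | c w. c \<in> C \<and> norm w \<le> r / 2}"
  have conv2: "convex C2"
    unfolding C2_def
  proof (rule convexI)
    fix a b and u v :: real assume ab: "a \<in> {c + w |c w. c \<in> C \<and> norm w \<le> r / 2}" "b \<in> {c + w |c w. c \<in> C \<and> norm w \<le> r / 2}"
      and uv0: "0 \<le> u" "0 \<le> v" "u + v = 1"
    then have uv: "0 \<le> u \<and> 0 \<le> v \<and> u + v = 1" by auto
    from ab obtain c w c' w' where e: "a = c + w" "b = c' + w'" "c \<in> C" "c' \<in> C" "norm w \<le> r/2" "norm w' \<le> r/2"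
      by blast
    have "u *\<^sub>R c + v *\<^sub>R c' \<in> C" using convexD[OF assms(2) e(3,4)] uv by auto
    moreover have "norm (u *\<^sub>R w + v *\<^sub>R w') \<le> r/2"
    proof -
      have "norm (u *\<^sub>R w + v *\<^sub>R w') \<le> norm (u *\<^sub>R w) + norm (v *\<^sub>R w')" by (rule norm_triangle_ineq)
      also have "\<dots> = u * norm w + v * norm w'" using uv by simp
      finally have "norm (u *\<^sub>R w + v *\<^sub>R w') \<le> u * norm w + v * norm w'" .
      also have "\<dots> \<le> u * (r/2) + v * (r/2)" using uv e by (intro add_mono mult_left_mono) auto
      also have "\<dots> = (u + v) * (r/2)" by (simp add: algebra_simps)
      finally show ?thesis using uv by simp
    qed
    moreover have "u *\<^sub>R a + v *\<^sub>R b = (u *\<^sub>R c + v *\<^sub>R c') + (u *\<^sub>R w + v *\<^sub>R w')"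
      using e by (simp add: algebra_simps)
    ultimately show "u *\<^sub>R a + v *\<^sub>R b \<in> {c + w |c w. c \<in> C \<and> norm w \<le> r / 2}" by blast
  qed
  have c02: "c0 \<in> C2" unfolding C2_def using c0 r by force
  have far: "norm (x0 - d) \<ge> r/2" if d: "d \<in> C2" for d
  proof -
    obtain c w where e: "d = c + w" "c \<in> C" "norm w \<le> r/2" using d unfolding C2_def by blast
    have "r \<le> dist x0 c" unfolding r_def using infdist_le[OF e(2)] .
    also have "dist x0 c = norm ((x0 - d) + w)" using e by (simp add: dist_norm algebra_simps)
    also have "\<dots> \<le> norm (x0 - d) + norm w" by (rule norm_triangle_ineq)
    finally show ?thesis using e by simp
  qed
  from sep_nonstrict[OF conv2 c02 _ far] r obtain f :: "'a \<Rightarrow>\<^sub>L real"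
    where f: "blinfun_apply f (x0 - c0) = 1" "\<And>c. c \<in> C2 \<Longrightarrow> blinfun_apply f c \<le> blinfun_apply f x0" by auto
  define e where "e = x0 - c0"
  have en: "e \<noteq> 0" using f(1) unfolding e_def by auto
  define w where "w = (r / 2 / norm e) *\<^sub>R e"
  have nw: "norm w \<le> r / 2" using en r unfolding w_def by simp
  have fw: "blinfun_apply f w = r / 2 / norm e" using f(1) unfolding w_def e_def by (simp add: blinfun.scaleR_right)
  have fwp: "blinfun_apply f w > 0" using fw r en by simp
  have "\<forall>c\<in>C. blinfun_apply f c \<le> blinfun_apply f x0 - blinfun_apply f w"
  proof
    fix c assume "c \<in> C"
    then have "c + w \<in> C2" unfolding C2_def using nw by blast
    from f(2)[OF this] show "blinfun_apply f c \<le> blinfun_apply f x0 - blinfun_apply f w" by (simp add: blinfun.add_right)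
  qed
  then show ?thesis using fwp by blast
qed

lemma strong_imp_weak:
  fixes x :: "nat \<Rightarrow> 'a::real_normed_vector"
  assumes "x \<longlonglongrightarrow> l" shows "weakly_conv x l"
  unfolding weakly_conv_def using assms by (auto intro: blinfun.tendsto)

lemma weak_subseq:
  assumes "weakly_conv x l" "strict_mono r" shows "weakly_conv (x \<circ> r) l"
  using assms unfolding weakly_conv_def
  by (auto simp: o_def intro: LIMSEQ_subseq_LIMSEQ[of _ _ r, unfolded o_def])

lemma weak_closed:
  fixes C :: "'a::real_normed_vector set"
  assumes "closed C" "convex C" "weakly_conv x l" "\<And>n. x n \<in> C"
  shows "l \<in> C"
proof (rule ccontr)
  assume "l \<notin> C"
  from separation[OF assms(1,2) this] obtain f :: "'a \<Rightarrow>\<^sub>L real" and \<delta> where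
    f: "\<delta> > 0" "\<And>c. c \<in> C \<Longrightarrow> blinfun_apply f c \<le> blinfun_apply f l - \<delta>" by blast
  have "(\<lambda>n. blinfun_apply f (x n)) \<longlonglongrightarrow> blinfun_apply f l" using assms(3) unfolding weakly_conv_def by blast
  then have "blinfun_apply f l \<le> blinfun_apply f l - \<delta>"
    by (rule LIMSEQ_le_const2) (use f assms(4) in auto)
  then show False using f by simp
qed

lemma sep_subspace:
  fixes C :: "'a::real_normed_vector set"
  assumes "closed C" "convex C" "C \<noteq> {}" "\<And>c t. c \<in> C \<Longrightarrow> t *\<^sub>R c \<in> C" "y \<notin> C"
  shows "\<exists>h::'a \<Rightarrow>\<^sub>L real. (\<forall>c\<in>C. blinfun_apply h c = 0) \<and> blinfun_apply h y > 0"
proof -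
  from separation[OF assms(1,2,5)] obtain h :: "'a \<Rightarrow>\<^sub>L real" and \<delta> where
    h: "\<delta> > 0" "\<And>c. c \<in> C \<Longrightarrow> blinfun_apply h c \<le> blinfun_apply h y - \<delta>" by blast
  have z: "blinfun_apply h c = 0" if "c \<in> C" for c
  proof (rule ccontr)
    assume nz: "blinfun_apply h c \<noteq> 0"
    define t where "t = (\<bar>blinfun_apply h y\<bar> + 1) / blinfun_apply h c"
    have "blinfun_apply h (t *\<^sub>R c) \<le> blinfun_apply h y - \<delta>" using h(2) assms(4)[OF that] by blast
    moreover have "blinfun_apply h (t *\<^sub>R c) = \<bar>blinfun_apply h y\<bar> + 1"
      using nz unfolding t_def by (simp add: blinfun.scaleR_right)
    ultimately show False using h(1) by linarith
  qed
  obtain c where "c \<in> C" using assms(3) by blast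
  then show ?thesis using z h by (intro exI[of _ h]) force
qed

definition lc :: "(nat \<Rightarrow> 'a::real_vector) \<Rightarrow> rat list \<Rightarrow> 'a" where
  "lc x cs = (\<Sum>i<length cs. of_rat (cs!i) *\<^sub>R x i)"

definition nthd :: "rat list \<Rightarrow> nat \<Rightarrow> rat" where
  "nthd cs i = (if i < length cs then cs!i else 0)"

lemma lc_pad: "length cs \<le> N \<Longrightarrow> lc x cs = (\<Sum>i<N. of_rat (nthd cs i) *\<^sub>R x i)"
proof -
  assume N: "length cs \<le> N"
  have "(\<Sum>i<N. of_rat (nthd cs i) *\<^sub>R x i) = (\<Sum>i<length cs. of_rat (nthd cs i) *\<^sub>R x i)"
    by (rule sum.mono_neutral_right) (use N in \<open>auto simp: nthd_def\<close>)
  also have "\<dots> = lc x cs" unfolding lc_def nthd_def by simp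
  finally show ?thesis by simp
qed

lemma lc_add: "\<exists>es. lc x es = lc x cs + lc x ds"
proof -
  define N where "N = max (length cs) (length ds)"
  define es where "es = map (\<lambda>i. nthd cs i + nthd ds i) [0..<N]"
  have "lc x es = (\<Sum>i<N. of_rat (nthd es i) *\<^sub>R x i)" by (rule lc_pad) (simp add: es_def)
  also have "\<dots> = (\<Sum>i<N. of_rat (nthd cs i) *\<^sub>R x i + of_rat (nthd ds i) *\<^sub>R x i)"
    by (rule sum.cong) (auto simp: es_def nthd_def of_rat_add scaleR_add_left)
  also have "\<dots> = lc x cs + lc x ds"
    using lc_pad[of cs N x] lc_pad[of ds N x] unfolding N_def by (simp add: sum.distrib)
  finally show ?thesis by blast
qed

lemma lc_scale: "lc x (map ((*) q) cs) = of_rat q *\<^sub>R lc x cs"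
  unfolding lc_def by (simp add: scaleR_sum_right of_rat_mult)

lemma lc_basis: "lc x (replicate n 0 @ [1]) = x n"
proof -
  have "lc x (replicate n 0 @ [1]) = (\<Sum>i<Suc n. of_rat ((replicate n 0 @ [1]) ! i) *\<^sub>R x i)"
    unfolding lc_def by simp
  also have "\<dots> = (\<Sum>i<n. of_rat ((replicate n 0 @ [1]) ! i) *\<^sub>R x i) + x n"
    by (simp add: nth_append)
  also have "(\<Sum>i<n. of_rat ((replicate n 0 @ [1]) ! i) *\<^sub>R x i) = 0"
    by (rule sum.neutral) (auto simp: nth_append)
  finally show ?thesis by simp
qed

lemma rat_approx: "e > 0 \<Longrightarrow> \<exists>q::rat. \<bar>of_rat q - t\<bar> < (e::real)"
proof -
  assume e: "e > 0"
  obtain r where "r \<in> \<rat>" "t < r" "r < t + e" using Rats_dense_in_real[of t "t + e"] e by auto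
  then obtain q where "r = of_rat q" by (auto elim: Rats_cases)
  then show ?thesis using \<open>t < r\<close> \<open>r < t + e\<close> by (intro exI[of _ q]) auto
qed

lemma lc_closure_subspace:
  fixes x :: "nat \<Rightarrow> 'a::real_normed_vector"
  defines "M \<equiv> closure (range (lc x))"
  shows "\<And>m m'. m \<in> M \<Longrightarrow> m' \<in> M \<Longrightarrow> m + m' \<in> M"
    and "\<And>m t. m \<in> M \<Longrightarrow> t *\<^sub>R m \<in> M"
    and "convex M" "closed M" "\<And>n. x n \<in> M" "countable (range (lc x))"
proof -
  show add: "m + m' \<in> M" if mm: "m \<in> M" "m' \<in> M" for m m'
    unfolding M_def closure_approachable
  proof (intro allI impI)
    fix e :: real assume e: "e > 0"
    obtain d where d: "d \<in> range (lc x)" "dist d m < e/2" using mm(1) e unfolding M_def closure_approachable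
      by (meson half_gt_zero)
    obtain d' where d': "d' \<in> range (lc x)" "dist d' m' < e/2" using mm(2) e unfolding M_def closure_approachable
      by (meson half_gt_zero)
    obtain cs ds where "d = lc x cs" "d' = lc x ds" using d d' by auto
    then obtain es where es: "lc x es = d + d'" using lc_add by metis
    have "dist (d + d') (m + m') \<le> dist d m + dist d' m'"
      by (simp add: dist_norm norm_diff_triangle_ineq)
    then have "dist (lc x es) (m + m') < e" using d d' es by simp
    then show "\<exists>y\<in>range (lc x). dist y (m + m') < e" by blast
  qed
  show sc: "t *\<^sub>R m \<in> M" if mM: "m \<in> M" for m t
    unfolding M_def closure_approachable
  proof (intro allI impI)
    fix e :: real assume e: "e > 0"
    have e1: "e / 2 / (\<bar>t\<bar> + 1) > 0" using e by simp
    obtain d where d: "d \<in> range (lc x)" "dist d m < e / 2 / (\<bar>t\<bar> + 1)"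
      using mM e1 unfolding M_def closure_approachable by blast
    have nd: "norm d + 1 > 0" using norm_ge_zero[of d] by linarith
    have e2: "e / 2 / (norm d + 1) > 0" using e nd by (intro divide_pos_pos) auto
    obtain q where q: "\<bar>of_rat q - t\<bar> < e / 2 / (norm d + 1)" using rat_approx[OF e2] by blast
    obtain cs where cs: "d = lc x cs" using d by auto
    have eqd: "of_rat q *\<^sub>R d - t *\<^sub>R m = (of_rat q - t) *\<^sub>R d + t *\<^sub>R (d - m)"
      by (simp add: algebra_simps)
    have "dist (of_rat q *\<^sub>R d) (t *\<^sub>R m) \<le> norm ((of_rat q - t) *\<^sub>R d) + norm (t *\<^sub>R (d - m))"
      unfolding dist_norm eqd by (rule norm_triangle_ineq)
    also have "norm ((of_rat q - t) *\<^sub>R d) = \<bar>of_rat q - t\<bar> * norm d" by simp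
    also have "\<dots> \<le> e / 2 / (norm d + 1) * norm d" using q by (intro mult_right_mono) auto
    also have "\<dots> = e / 2 * (norm d / (norm d + 1))" by simp
    also have "\<dots> \<le> e / 2 * 1" using e nd by (intro mult_left_mono) auto
    also have "norm (t *\<^sub>R (d - m)) = \<bar>t\<bar> * dist d m" by (simp add: dist_norm)
    also have "\<dots> \<le> \<bar>t\<bar> * (e / 2 / (\<bar>t\<bar> + 1))" using d by (intro mult_left_mono) auto
    also have "\<dots> < e / 2" using e by (simp add: field_simps)
    finally have "dist (of_rat q *\<^sub>R d) (t *\<^sub>R m) < e" by simp
    moreover have "of_rat q *\<^sub>R d \<in> range (lc x)" using cs lc_scale[of x q cs] by (metis rangeI)
    ultimately show "\<exists>y\<in>range (lc x). dist y (t *\<^sub>R m) < e" by blast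
  qed
  show "convex M"
    by (rule convexI) (intro add sc)
  show "closed M" unfolding M_def by simp
  show "x n \<in> M" for n unfolding M_def using lc_basis[of x n] closure_subset by (metis rangeI subsetD)
  show "countable (range (lc x))" by simp
qed

lemma blinfun_apply_bound: "\<bar>blinfun_apply (f :: 'a::real_normed_vector \<Rightarrow>\<^sub>L real) y\<bar> \<le> norm f * norm y"
  using norm_blinfun[of f y] by simp

theorem weak_seq_compact:
  fixes x :: "nat \<Rightarrow> 'a::real_normed_vector"
  assumes refl: "reflexive_space TYPE('a)" and bd: "\<And>n. norm (x n) \<le> R"
  shows "\<exists>r l. strict_mono r \<and> weakly_conv (x \<circ> r) l"
proof -
  have R0: "R \<ge> 0" using bd[of 0] norm_ge_zero[of "x 0"] by linarith
  define D where "D = range (lc x)"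
  define M where "M = closure D"
  have Madd: "\<And>m m'. m \<in> M \<Longrightarrow> m' \<in> M \<Longrightarrow> m + m' \<in> M"
    and Msc: "\<And>m t. m \<in> M \<Longrightarrow> t *\<^sub>R m \<in> M"
    and Mconv: "convex M" and Mcl: "closed M" and xM: "\<And>n. x n \<in> M" and Dc: "countable D"
    using lc_closure_subspace[where x=x] unfolding M_def D_def by auto
  have Dne: "D \<noteq> {}" unfolding D_def by simp
  define d where "d = from_nat_into D"
  have "\<forall>j. \<exists>f::'a \<Rightarrow>\<^sub>L real. norm f \<le> 1 \<and> blinfun_apply f (d j) = norm (d j)"
    using norming by blast
  then obtain F :: "nat \<Rightarrow> 'a \<Rightarrow>\<^sub>L real" where F: "\<And>j. norm (F j) \<le> 1" "\<And>j. blinfun_apply (F j) (d j) = norm (d j)"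
    by metis
  have y0: "y = 0" if yM: "y \<in> M" and Fy: "\<And>j. blinfun_apply (F j) y = 0" for y
  proof (rule ccontr)
    assume "y \<noteq> 0"
    then have ny: "norm y > 0" by simp
    obtain d' where d': "d' \<in> D" "dist d' y < norm y / 3" using yM ny unfolding M_def closure_approachable
      by (meson divide_pos_pos zero_less_numeral)
    obtain j where j: "d j = d'" using from_nat_into_surj[OF Dc d'(1)] unfolding d_def by blast
    have "norm (d j) = blinfun_apply (F j) (d j - y)" using F(2)[of j] Fy[of j] by (simp add: blinfun.diff_right)
    also have "\<dots> \<le> norm (F j) * norm (d j - y)" using blinfun_apply_bound[of "F j" "d j - y"] by simp
    also have "\<dots> \<le> 1 * norm (d j - y)" using F(1)[of j] by (intro mult_right_mono) auto
    finally have n1: "norm (d j) < norm y / 3" using d' j by (simp add: dist_norm)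
    have t1: "norm y \<le> norm (d j) + norm (y - d j)" using norm_triangle_ineq[of "d j" "y - d j"] by simp
    have t2: "norm (y - d j) < norm y / 3" using d' j by (simp add: dist_norm norm_minus_commute)
    show False using n1 t1 t2 ny by linarith
  qed
  have Fbd: "\<bar>blinfun_apply (F j) (x n)\<bar> \<le> R" for j n
  proof -
    have "\<bar>blinfun_apply (F j) (x n)\<bar> \<le> norm (F j) * norm (x n)" by (rule blinfun_apply_bound)
    also have "\<dots> \<le> 1 * R" using F(1)[of j] bd[of n] by (intro mult_mono) auto
    finally show ?thesis by simp
  qed
  interpret S: subseqs "\<lambda>j s. convergent (\<lambda>k. blinfun_apply (F j) (x (s k)))"
  proof
    fix j and s :: "nat \<Rightarrow> nat" assume "strict_mono s"
    have "bounded (range (\<lambda>k. blinfun_apply (F j) (x (s k))))"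
      unfolding bounded_iff using Fbd by auto
    from bounded_imp_convergent_subsequence[OF this] obtain l r where
      "strict_mono r" "((\<lambda>k. blinfun_apply (F j) (x (s k))) \<circ> r) \<longlonglongrightarrow> l" by blast
    then show "\<exists>r'. strict_mono r' \<and> convergent (\<lambda>k. blinfun_apply (F j) (x ((s \<circ> r') k)))"
      by (auto simp: convergent_def o_def)
  qed
  define \<sigma> where "\<sigma> = S.diagseq"
  have \<sigma>: "strict_mono \<sigma>" unfolding \<sigma>_def by (rule S.subseq_diagseq)
  have convF: "convergent (\<lambda>k. blinfun_apply (F j) (x (\<sigma> k)))" for j
  proof -
    have "convergent (\<lambda>k. blinfun_apply (F j) (x ((S.diagseq \<circ> (+) (Suc j)) k)))"
    proof (rule S.diagseq_holds)
      fix r s :: "nat \<Rightarrow> nat" and n assume "strict_mono r" "convergent (\<lambda>k. blinfun_apply (F n) (x (s k)))"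
      from convergent_subseq_convergent[OF this(2) this(1)]
      show "convergent (\<lambda>k. blinfun_apply (F n) (x ((s \<circ> r) k)))" by (simp add: o_def)
    qed
    then obtain L where "(\<lambda>k. blinfun_apply (F j) (x (\<sigma> (k + Suc j)))) \<longlonglongrightarrow> L"
      unfolding convergent_def \<sigma>_def by (auto simp: o_def add.commute)
    then have "(\<lambda>k. blinfun_apply (F j) (x (\<sigma> k))) \<longlonglongrightarrow> L" by (rule LIMSEQ_offset)
    then show ?thesis unfolding convergent_def by blast
  qed
  define T where "T = {g :: 'a \<Rightarrow>\<^sub>L real. convergent (\<lambda>k. blinfun_apply g (x (\<sigma> k)))}"
  have Tadd: "g + g' \<in> T" if "g \<in> T" "g' \<in> T" for g g'
    using that unfolding T_def by (auto simp: plus_blinfun.rep_eq intro: convergent_add)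
  have Tsc: "t *\<^sub>R g \<in> T" if "g \<in> T" for g t
    using that unfolding T_def by (auto simp: scaleR_blinfun.rep_eq intro: convergent_mult convergent_const)
  have Tconv: "convex T" by (rule convexI) (intro Tadd Tsc)
  have TF: "F j \<in> T" for j using convF unfolding T_def by blast
  have TM: "h \<in> T" if "\<And>m. m \<in> M \<Longrightarrow> blinfun_apply h m = 0" for h
    using that xM unfolding T_def by (simp add: convergent_const)
  have Tcl: "closed T"
  proof -
    have "g \<in> T" if g: "g \<in> closure T" for g
    proof -
      have "Cauchy (\<lambda>k. blinfun_apply g (x (\<sigma> k)))"
      proof (rule metric_CauchyI)
        fix e :: real assume e: "e > 0"
        have e3: "e / 3 / (R + 1) > 0" using e R0 by (intro divide_pos_pos) auto
        obtain g' where g': "g' \<in> T" "dist g' g < e / 3 / (R + 1)" using g e3 unfolding closure_approachable by blast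
        have "Cauchy (\<lambda>k. blinfun_apply g' (x (\<sigma> k)))" using g' unfolding T_def by (simp add: convergent_Cauchy)
        then obtain N where N: "\<And>m n. m \<ge> N \<Longrightarrow> n \<ge> N \<Longrightarrow> dist (blinfun_apply g' (x (\<sigma> m))) (blinfun_apply g' (x (\<sigma> n))) < e / 3"
          using e unfolding Cauchy_def by (meson divide_pos_pos zero_less_numeral)
        have close: "\<bar>blinfun_apply g (x k) - blinfun_apply g' (x k)\<bar> \<le> e / 3" for k
        proof -
          have "\<bar>blinfun_apply g (x k) - blinfun_apply g' (x k)\<bar> = \<bar>blinfun_apply (g - g') (x k)\<bar>"
            by (simp add: minus_blinfun.rep_eq)
          also have "\<dots> \<le> norm (g - g') * norm (x k)" by (rule blinfun_apply_bound)
          also have "\<dots> \<le> (e / 3 / (R + 1)) * R"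
            using g'(2) bd[of k] e3 by (intro mult_mono) (auto simp: dist_norm norm_minus_commute)
          also have "\<dots> = e / 3 * (R / (R + 1))" by simp
          also have "\<dots> \<le> e / 3 * 1" using e R0 by (intro mult_left_mono) auto
          finally show ?thesis by simp
        qed
        show "\<exists>N. \<forall>m\<ge>N. \<forall>n\<ge>N. dist (blinfun_apply g (x (\<sigma> m))) (blinfun_apply g (x (\<sigma> n))) < e"
        proof (intro exI allI impI)
          fix m n assume mn: "m \<ge> N" "n \<ge> N"
          have "dist (blinfun_apply g (x (\<sigma> m))) (blinfun_apply g (x (\<sigma> n))) \<le>
            \<bar>blinfun_apply g (x (\<sigma> m)) - blinfun_apply g' (x (\<sigma> m))\<bar> + dist (blinfun_apply g' (x (\<sigma> m))) (blinfun_apply g' (x (\<sigma> n)))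
            + \<bar>blinfun_apply g (x (\<sigma> n)) - blinfun_apply g' (x (\<sigma> n))\<bar>"
            by (simp add: dist_real_def)
          also have "\<dots> < e / 3 + e / 3 + e / 3" using close[of "\<sigma> m"] close[of "\<sigma> n"] N[OF mn] by linarith
          finally show "dist (blinfun_apply g (x (\<sigma> m))) (blinfun_apply g (x (\<sigma> n))) < e" by simp
        qed
      qed
      then show ?thesis unfolding T_def by (simp add: Cauchy_convergent_iff)
    qed
    then show ?thesis using closure_subset_eq by blast
  qed
  have Tall: "g \<in> T" for g
  proof (rule ccontr)
    assume gT: "g \<notin> T"
    have Tne: "T \<noteq> {}" using TF by blast
    from sep_subspace[OF Tcl Tconv Tne Tsc gT] obtain \<Phi> :: "('a \<Rightarrow>\<^sub>L real) \<Rightarrow>\<^sub>L real"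
      where \<Phi>: "\<And>t. t \<in> T \<Longrightarrow> blinfun_apply \<Phi> t = 0" "blinfun_apply \<Phi> g > 0" by blast
    obtain y where y: "\<And>f. blinfun_apply \<Phi> f = blinfun_apply f y"
      using refl unfolding reflexive_space_def by blast
    have yM: "y \<in> M"
    proof (rule ccontr)
      assume "y \<notin> M"
      have "M \<noteq> {}" using xM by blast
      from sep_subspace[OF Mcl Mconv this Msc \<open>y \<notin> M\<close>] obtain h :: "'a \<Rightarrow>\<^sub>L real"
        where h: "\<And>m. m \<in> M \<Longrightarrow> blinfun_apply h m = 0" "blinfun_apply h y > 0" by blast
      have "h \<in> T" using TM h(1) by blast
      then show False using \<Phi>(1)[of h] y[of h] h(2) by simp
    qed
    have "blinfun_apply (F j) y = 0" for j using \<Phi>(1)[OF TF[of j]] y[of "F j"] by simp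
    then have "y = 0" using y0 yM by blast
    then show False using \<Phi>(2) y[of g] by simp
  qed
  define \<Psi> where "\<Psi> g = lim (\<lambda>k. blinfun_apply g (x (\<sigma> k)))" for g :: "'a \<Rightarrow>\<^sub>L real"
  have \<Psi>lim: "(\<lambda>k. blinfun_apply g (x (\<sigma> k))) \<longlonglongrightarrow> \<Psi> g" for g :: "'a \<Rightarrow>\<^sub>L real"
    using Tall[of g] unfolding T_def \<Psi>_def by (simp add: convergent_LIMSEQ_iff)
  have lin: "linear \<Psi>"
  proof (rule linearI)
    fix g g' show "\<Psi> (g + g') = \<Psi> g + \<Psi> g'"
      using tendsto_add[OF \<Psi>lim[of g] \<Psi>lim[of g']] \<Psi>lim[of "g + g'"]
      by (simp add: plus_blinfun.rep_eq LIMSEQ_unique)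
  next
    fix t g show "\<Psi> (t *\<^sub>R g) = t *\<^sub>R \<Psi> g"
      using tendsto_mult_left[OF \<Psi>lim[of g], of t] \<Psi>lim[of "t *\<^sub>R g"]
      by (simp add: scaleR_blinfun.rep_eq LIMSEQ_unique)
  qed
  have \<Psi>bd: "\<Psi> g \<le> R * norm g" for g :: "'a \<Rightarrow>\<^sub>L real"
  proof -
    have "\<forall>k\<ge>0. blinfun_apply g (x (\<sigma> k)) \<le> R * norm g"
    proof (intro allI impI)
      fix k :: nat
      have "blinfun_apply g (x (\<sigma> k)) \<le> norm g * norm (x (\<sigma> k))" using blinfun_apply_bound[of g] by (meson abs_le_D1)
      also have "\<dots> \<le> norm g * R" using bd by (intro mult_left_mono) auto
      finally show "blinfun_apply g (x (\<sigma> k)) \<le> R * norm g" by (simp add: mult.commute)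
    qed
    then show ?thesis using Lim_bounded[OF \<Psi>lim[of g]] by blast
  qed
  from blinfun_of_linear[OF lin R0 \<Psi>bd] obtain \<Phi> :: "('a \<Rightarrow>\<^sub>L real) \<Rightarrow>\<^sub>L real" where
    \<Phi>: "blinfun_apply \<Phi> = \<Psi>" by blast
  obtain l where l: "\<And>f. blinfun_apply \<Phi> f = blinfun_apply f l"
    using refl unfolding reflexive_space_def by blast
  have "weakly_conv (x \<circ> \<sigma>) l"
    unfolding weakly_conv_def using \<Psi>lim l \<Phi> by (simp add: o_def)
  then show ?thesis using \<sigma> by blast
qed

lemma closedin_eval_le:
  "closedin (product_topology (\<lambda>_. euclideanreal) UNIV) {\<Phi>. \<Phi> f \<le> (c::real)}"
proof -
  have "closedin (product_topology (\<lambda>_. euclideanreal) UNIV)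
          {\<Phi> \<in> topspace (product_topology (\<lambda>_. euclideanreal) UNIV). (\<lambda>\<Phi>. \<Phi> f) \<Phi> \<in> {..c}}"
    by (rule closedin_continuous_map_preimage) (auto intro: continuous_map_product_projection)
  then show ?thesis by simp
qed

lemma closedin_eval_eq:
  assumes "continuous_map (product_topology (\<lambda>_. euclideanreal) UNIV) euclideanreal g"
  shows "closedin (product_topology (\<lambda>_. euclideanreal) UNIV) {\<Phi>. g \<Phi> = (0::real)}"
proof -
  have "closedin (product_topology (\<lambda>_. euclideanreal) UNIV)
          {\<Phi> \<in> topspace (product_topology (\<lambda>_. euclideanreal) UNIV). g \<Phi> \<in> {0}}"
    by (rule closedin_continuous_map_preimage[OF assms]) auto
  then show ?thesis by simp
qed

lemma proj_cont: "continuous_map (product_topology (\<lambda>_. euclideanreal) UNIV) euclideanreal (\<lambda>\<Phi>. \<Phi> f)"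
  using continuous_map_product_projection[of f UNIV "\<lambda>_. euclideanreal"] by simp

theorem fip_convex:
  fixes \<K> :: "'a::real_normed_vector set set"
  assumes refl: "reflexive_space TYPE('a)"
    and K: "\<And>K. K \<in> \<K> \<Longrightarrow> closed K \<and> convex K \<and> K \<subseteq> cball 0 R"
    and fip: "\<And>\<F>. finite \<F> \<Longrightarrow> \<F> \<subseteq> \<K> \<Longrightarrow> \<Inter>\<F> \<noteq> {}"
  shows "\<Inter>\<K> \<noteq> {}"
proof (cases "\<K> = {}")
  case True then show ?thesis by simp
next
  case False
  then obtain K0 where K0: "K0 \<in> \<K>" by blast
  have "K0 \<noteq> {}" using fip[of "{K0}"] K0 by auto
  then obtain k where "k \<in> K0" by blast
  then have "norm k \<le> R" using K[OF K0] by (auto simp: subset_iff)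
  then have R0: "R \<ge> 0" using norm_ge_zero[of k] by linarith
  let ?X = "product_topology (\<lambda>_::'a \<Rightarrow>\<^sub>L real. euclideanreal) UNIV"
  define \<sigma> where "\<sigma> K f = Sup (blinfun_apply f ` K)" for K and f :: "'a \<Rightarrow>\<^sub>L real"
  define B where "B = PiE (UNIV :: ('a \<Rightarrow>\<^sub>L real) set) (\<lambda>f. {-(R * norm f)..R * norm f})"
  define E1 where "E1 = (\<lambda>(f, g). {\<Phi>::('a \<Rightarrow>\<^sub>L real) \<Rightarrow> real. \<Phi> (f + g) - \<Phi> f - \<Phi> g = 0})"
  define E2 where "E2 = (\<lambda>(t, f). {\<Phi>::('a \<Rightarrow>\<^sub>L real) \<Rightarrow> real. \<Phi> (t *\<^sub>R f) - t * \<Phi> f = 0})"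
  define H where "H = (\<lambda>(f, K). {\<Phi>::('a \<Rightarrow>\<^sub>L real) \<Rightarrow> real. \<Phi> f \<le> \<sigma> K f})"
  define \<U> where "\<U> = range E1 \<union> range E2 \<union> H ` (UNIV \<times> \<K>)"
  have Bc: "compactin ?X B" unfolding B_def by (simp add: compactin_PiE)
  have Ucl: "closedin ?X C" if "C \<in> \<U>" for C
  proof -
    have c1': "closedin ?X (E1 (f, g))" for f g
      unfolding E1_def prod.case by (intro closedin_eval_eq continuous_map_diff proj_cont)
    have c1: "closedin ?X (E1 p)" for p using c1' by (cases p) (simp only:)
    have c2': "closedin ?X (E2 (t, f))" for t f
      unfolding E2_def prod.case by (intro closedin_eval_eq continuous_map_diff proj_cont continuous_map_real_mult_left)
    have c2: "closedin ?X (E2 p)" for p using c2' by (cases p) (simp only:)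
    have c3': "closedin ?X (H (f, K))" for f K
      unfolding H_def prod.case by (rule closedin_eval_le)
    have c3: "closedin ?X (H p)" for p using c3' by (cases p) (simp only:)
    show ?thesis using that c1 c2 c3 unfolding \<U>_def by blast
  qed
  have bdd: "bdd_above (blinfun_apply f ` K)" if "K \<in> \<K>" for f :: "'a \<Rightarrow>\<^sub>L real" and K
  proof -
    have "blinfun_apply f c \<le> norm f * R" if "c \<in> K" for c
    proof -
      have "blinfun_apply f c \<le> norm f * norm c" using blinfun_apply_bound[of f c] by linarith
      also have "\<dots> \<le> norm f * R" using K[OF \<open>K \<in> \<K>\<close>] that by (intro mult_left_mono) auto
      finally show ?thesis .
    qed
    then show ?thesis by (meson bdd_above.I2)
  qed
  have fipX: "\<And>\<U>. (\<forall>C\<in>\<U>. closedin ?X C) \<Longrightarrow> (\<forall>\<F>. finite \<F> \<and> \<F> \<subseteq> \<U> \<longrightarrow> B \<inter> \<Inter>\<F> \<noteq> {}) \<Longrightarrow> B \<inter> \<Inter>\<U> \<noteq> {}"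
    using compactin_fip[of ?X B] Bc by blast
  have "B \<inter> \<Inter>\<U> \<noteq> {}"
  proof (rule fipX)
    show "\<forall>C\<in>\<U>. closedin ?X C" using Ucl by blast
  next
    show "\<forall>\<F>. finite \<F> \<and> \<F> \<subseteq> \<U> \<longrightarrow> B \<inter> \<Inter>\<F> \<noteq> {}"
    proof (intro allI impI)
    fix \<F> assume F: "finite \<F> \<and> \<F> \<subseteq> \<U>"
    have "\<F> \<inter> H ` (UNIV \<times> \<K>) \<subseteq> H ` (UNIV \<times> \<K>)" by blast
    from finite_subset_image[OF _ this] F obtain G where G: "G \<subseteq> UNIV \<times> \<K>" "finite G"
      "\<F> \<inter> H ` (UNIV \<times> \<K>) = H ` G" by blast
    have "finite (snd ` G)" "snd ` G \<subseteq> \<K>" using G by auto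
    have "\<exists>u. u \<in> \<Inter>(snd ` G) \<and> norm u \<le> R"
    proof (cases "G = {}")
      case True then show ?thesis using R0 by (intro exI[of _ 0]) auto
    next
      case False
      then obtain p where p: "p \<in> G" by blast
      from fip[OF \<open>finite (snd ` G)\<close> \<open>snd ` G \<subseteq> \<K>\<close>] obtain u where u: "u \<in> \<Inter>(snd ` G)" by blast
      then have "u \<in> snd p" using p by blast
      moreover have "snd p \<in> \<K>" using p G(1) by auto
      ultimately have "norm u \<le> R" using K by fastforce
      then show ?thesis using u by blast
    qed
    then obtain u where u: "u \<in> \<Inter>(snd ` G)" and un: "norm u \<le> R" by blast
    define \<Phi> where "\<Phi> f = blinfun_apply f u" for f :: "'a \<Rightarrow>\<^sub>L real"
    show "B \<inter> \<Inter>\<F> \<noteq> {}"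
    proof -
      have "\<Phi> \<in> B"
        unfolding B_def
      proof (simp add: PiE_iff, intro allI)
        fix f :: "'a \<Rightarrow>\<^sub>L real"
        have "\<bar>\<Phi> f\<bar> \<le> norm f * norm u" unfolding \<Phi>_def by (rule blinfun_apply_bound)
        also have "\<dots> \<le> norm f * R" using un by (intro mult_left_mono) auto
        finally show "- (R * norm f) \<le> \<Phi> f \<and> \<Phi> f \<le> R * norm f" by (simp add: mult.commute abs_le_iff)
      qed
      moreover have "\<Phi> \<in> C" if C: "C \<in> \<F>" for C
      proof -
        have "C \<in> \<U>" using F C by blast
        then consider "C \<in> range E1" | "C \<in> range E2" | "C \<in> H ` (UNIV \<times> \<K>)" unfolding \<U>_def by blast
        then show ?thesis
        proof cases
          case 1 then show ?thesis unfolding E1_def \<Phi>_def by (auto simp: plus_blinfun.rep_eq)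
        next
          case 2 then show ?thesis unfolding E2_def \<Phi>_def by (auto simp: scaleR_blinfun.rep_eq)
        next
          case 3
          then have "C \<in> H ` G" using G(3) C by blast
          then obtain f K where fK: "(f, K) \<in> G" "C = H (f, K)" by auto
          have "K \<in> \<K>" using fK G(1) by auto
          have "u \<in> K" using u fK by force
          have "\<Phi> f \<le> \<sigma> K f" unfolding \<sigma>_def \<Phi>_def
            by (rule cSup_upper) (use \<open>u \<in> K\<close> bdd[OF \<open>K \<in> \<K>\<close>] in auto)
          then show ?thesis using fK unfolding H_def by simp
        qed
      qed
      ultimately show ?thesis by blast
    qed
    qed
  qed
  then obtain \<Phi> where \<Phi>B: "\<Phi> \<in> B" and \<Phi>U: "\<And>C. C \<in> \<U> \<Longrightarrow> \<Phi> \<in> C" by blast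
  have lin: "linear \<Phi>"
  proof (rule linearI)
    fix f g :: "'a \<Rightarrow>\<^sub>L real"
    have "\<Phi> \<in> E1 (f, g)" using \<Phi>U unfolding \<U>_def by blast
    then show "\<Phi> (f + g) = \<Phi> f + \<Phi> g" unfolding E1_def by simp
  next
    fix t and f :: "'a \<Rightarrow>\<^sub>L real"
    have "\<Phi> \<in> E2 (t, f)" using \<Phi>U unfolding \<U>_def by blast
    then show "\<Phi> (t *\<^sub>R f) = t *\<^sub>R \<Phi> f" unfolding E2_def by simp
  qed
  have "\<Phi> f \<le> R * norm f" for f using \<Phi>B unfolding B_def by (simp add: PiE_iff)
  from blinfun_of_linear[OF lin R0 this] obtain \<phi> :: "('a \<Rightarrow>\<^sub>L real) \<Rightarrow>\<^sub>L real"
    where \<phi>: "blinfun_apply \<phi> = \<Phi>" by blast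
  obtain y where y: "\<And>f. blinfun_apply \<phi> f = blinfun_apply f y"
    using refl unfolding reflexive_space_def by blast
  have "y \<in> K" if KK: "K \<in> \<K>" for K
  proof (rule ccontr)
    assume "y \<notin> K"
    from separation[OF _ _ this] K[OF KK] obtain f :: "'a \<Rightarrow>\<^sub>L real" and \<delta> where
      f: "\<delta> > 0" "\<And>c. c \<in> K \<Longrightarrow> blinfun_apply f c \<le> blinfun_apply f y - \<delta>" by blast
    have "K \<noteq> {}" using fip[of "{K}"] KK by auto
    then have "\<sigma> K f \<le> blinfun_apply f y - \<delta>" unfolding \<sigma>_def by (intro cSup_least) (use f in auto)
    moreover have "\<Phi> \<in> H (f, K)" using \<Phi>U KK unfolding \<U>_def by blast
    then have "\<Phi> f \<le> \<sigma> K f" unfolding H_def by simp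
    moreover have "\<Phi> f = blinfun_apply f y" using y \<phi> by metis
    ultimately show False using f(1) by linarith
  qed
  then show ?thesis by blast
qed

lemma freq_subseq:
  assumes "\<not> eventually P sequentially"
  shows "\<exists>r::nat\<Rightarrow>nat. strict_mono r \<and> (\<forall>k. \<not> P (r k))"
proof -
  have "frequently (\<lambda>n. \<not> P n) sequentially" using assms by (simp add: not_eventually)
  then have "infinite {n. \<not> P n}" unfolding cofinite_eq_sequentially[symmetric] frequently_cofinite by simp
  from infinite_enumerate[OF this] show ?thesis by blast
qed

lemma lsc_seq:
  fixes \<phi> :: "'a::metric_space \<Rightarrow> real"
  assumes "lower_semicont \<phi>" "x \<longlonglongrightarrow> l" "e > 0"
  shows "eventually (\<lambda>n. \<phi> l - e < \<phi> (x n)) sequentially"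
proof -
  have "\<forall>\<^sub>F y in at l. \<phi> l - e < \<phi> y" using assms(1,3) unfolding lower_semicont_def by blast
  then obtain d where d: "d > 0" "\<And>y. y \<noteq> l \<Longrightarrow> dist y l < d \<Longrightarrow> \<phi> l - e < \<phi> y"
    unfolding eventually_at by auto
  have "eventually (\<lambda>n. dist (x n) l < d) sequentially" using assms(2) d(1) by (rule tendstoD)
  then show ?thesis
  proof eventually_elim
    case (elim n)
    show ?case
    proof (cases "x n = l")
      case True then show ?thesis using assms(3) by simp
    next
      case False then show ?thesis using d elim by auto
    qed
  qed
qed

lemma sublevel_closed:
  fixes \<phi> :: "'a::metric_space \<Rightarrow> real"
  assumes "lower_semicont \<phi>"
  shows "closed {y. \<phi> y \<le> c}"
  unfolding closed_sequential_limits
proof (intro allI impI)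
  fix x l assume xl: "(\<forall>n. x n \<in> {y. \<phi> y \<le> c}) \<and> x \<longlonglongrightarrow> l"
  have "\<phi> l \<le> c + e" if e0: "e > 0" for e
  proof -
    from lsc_seq[OF assms conjunct2[OF xl] e0] obtain N where "\<forall>n\<ge>N. \<phi> l - e < \<phi> (x n)"
      unfolding eventually_sequentially by blast
    then have "\<phi> l - e < \<phi> (x N)" by simp
    moreover have "\<phi> (x N) \<le> c" using xl by auto
    ultimately show ?thesis by linarith
  qed
  then show "l \<in> {y. \<phi> y \<le> c}" by (simp add: field_le_epsilon)
qed

lemma sublevel_convex:
  assumes "convex_on UNIV \<phi>"
  shows "convex {y. \<phi> y \<le> (c::real)}"
proof (rule convexI)
  fix x y and u v :: real assume xy: "x \<in> {y. \<phi> y \<le> c}" "y \<in> {y. \<phi> y \<le> c}" and uv: "0 \<le> u" "0 \<le> v" "u + v = 1"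
  have uu: "u = 1 - v" using uv by simp
  have "\<phi> ((1 - v) *\<^sub>R x + v *\<^sub>R y) \<le> (1 - v) * \<phi> x + v * \<phi> y"
    using convex_onD[OF assms] uv by auto
  also have "\<dots> \<le> (1 - v) * c + v * c" using xy uv by (intro add_mono mult_left_mono) auto
  also have "(1 - v) * c + v * c = c" by (simp add: algebra_simps)
  finally show "u *\<^sub>R x + v *\<^sub>R y \<in> {y. \<phi> y \<le> c}" unfolding uu by simp
qed

lemma weak_lsc:
  fixes \<phi> :: "'a::real_normed_vector \<Rightarrow> real"
  assumes cv: "convex_on UNIV \<phi>" and lsc: "lower_semicont \<phi>" and w: "weakly_conv x l" and e: "e > 0"
  shows "eventually (\<lambda>n. \<phi> l - e < \<phi> (x n)) sequentially"
proof (rule ccontr)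
  assume "\<not> ?thesis"
  from freq_subseq[OF this] obtain r :: "nat \<Rightarrow> nat" where r1: "strict_mono r" and r2: "\<forall>k. \<not> (\<phi> l - e < \<phi> (x (r k)))"
    by blast
  have r: "strict_mono r" "\<And>k. \<phi> (x (r k)) \<le> \<phi> l - e" using r1 r2 by (auto simp: not_less)
  have "l \<in> {y. \<phi> y \<le> \<phi> l - e}"
    by (rule weak_closed[OF sublevel_closed[OF lsc] sublevel_convex[OF cv] weak_subseq[OF w r(1)]])
       (use r(2) in auto)
  then show False using e by simp
qed

context
  fixes \<phi> :: "'a::banach \<Rightarrow> real"
  assumes cv: "convex_on UNIV \<phi>" and lsc: "lower_semicont \<phi>"
begin

lemma phi_bdd_somewhere: "\<exists>a r k. r > 0 \<and> (\<forall>y. dist y a < r \<longrightarrow> \<phi> y \<le> k)"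
proof (rule ccontr)
  assume nb: "\<not> ?thesis"
  define \<G> where "\<G> = range (\<lambda>k::nat. {y. \<phi> y \<le> real k})"
  have "euclidean interior_of \<Union>\<G> = {}"
  proof (rule Baire_category_alt)
    show "completely_metrizable_space (euclidean :: 'a topology) \<or> locally_compact_space (euclidean :: 'a topology) \<and> regular_space (euclidean :: 'a topology)"
      using completely_metrizable_space_euclidean by blast
    show "countable \<G>" unfolding \<G>_def by simp
    fix T assume "T \<in> \<G>"
    then obtain k :: nat where T: "T = {y. \<phi> y \<le> real k}" unfolding \<G>_def by blast
    show "closedin euclidean T \<and> euclidean interior_of T = {}"
    proof
      show "closedin euclidean T" unfolding T using sublevel_closed[OF lsc] by simp
      show "euclidean interior_of T = {}"
      proof (rule ccontr)
        assume "euclidean interior_of T \<noteq> {}"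
        then obtain a U where "open U" "a \<in> U" "U \<subseteq> T" unfolding interior_of_def by auto
        then obtain r where "r > 0" "ball a r \<subseteq> T" by (meson open_contains_ball subset_trans)
        from nb have "\<exists>y. dist y a < r \<and> \<not> \<phi> y \<le> real k" using \<open>r > 0\<close> by blast
        then obtain y where "dist y a < r" "\<not> \<phi> y \<le> real k" by blast
        moreover have "y \<in> ball a r" using \<open>dist y a < r\<close> by (simp add: dist_commute)
        ultimately show False using \<open>ball a r \<subseteq> T\<close> T by auto
      qed
    qed
  qed
  moreover have "\<Union>\<G> = UNIV"
  proof -
    have "y \<in> \<Union>\<G>" for y
    proof -
      obtain k :: nat where "\<phi> y \<le> real k" using real_arch_simple by blast
      then show ?thesis unfolding \<G>_def by blast
    qed
    then show ?thesis by blast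
  qed
  ultimately show False by simp
qed

lemma phi_local_bound: "\<exists>\<rho> M. \<rho> > 0 \<and> (\<forall>y. dist y x < \<rho> \<longrightarrow> \<phi> y \<le> M)"
proof -
  obtain a r k where ark: "r > 0" "\<And>y. dist y a < r \<Longrightarrow> \<phi> y \<le> k" using phi_bdd_somewhere by blast
  define M where "M = (1/2) * \<phi> (2 *\<^sub>R x - a) + (1/2) * k"
  have "\<phi> y \<le> M" if y: "dist y x < r / 2" for y
  proof -
    define z where "z = a + 2 *\<^sub>R (y - x)"
    have "dist z a < r" using y unfolding z_def by (simp add: dist_norm)
    then have "\<phi> z \<le> k" by (rule ark(2))
    have "y = (1 - 1/2) *\<^sub>R (2 *\<^sub>R x - a) + (1/2) *\<^sub>R z" unfolding z_def by (simp add: algebra_simps)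
    then have "\<phi> y \<le> (1 - 1/2) * \<phi> (2 *\<^sub>R x - a) + (1/2) * \<phi> z"
      using convex_onD[OF cv, of "1/2" "2 *\<^sub>R x - a" z] by simp
    then show ?thesis unfolding M_def using \<open>\<phi> z \<le> k\<close> by simp
  qed
  then show ?thesis using ark(1) by (intro exI[of _ "r/2"] exI[of _ M]) auto
qed

lemma phi_usc:
  assumes "x \<longlonglongrightarrow> l" "e > 0"
  shows "eventually (\<lambda>n. \<phi> (x n) < \<phi> l + e) sequentially"
proof -
  obtain \<rho> M where \<rho>: "\<rho> > 0" "\<And>y. dist y l < \<rho> \<Longrightarrow> \<phi> y \<le> M" using phi_local_bound[of l] by blast
  define t where "t = min 1 (e / (2 * (\<bar>M - \<phi> l\<bar> + 1)))"
  have pos: "2 * (\<bar>M - \<phi> l\<bar> + 1) > 0" by (intro mult_pos_pos add_nonneg_pos) auto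
  have t: "t > 0" "t \<le> 1" using assms(2) pos unfolding t_def by (auto intro!: divide_pos_pos)
  have te: "t * \<bar>M - \<phi> l\<bar> < e"
  proof -
    have "t * \<bar>M - \<phi> l\<bar> \<le> e / (2 * (\<bar>M - \<phi> l\<bar> + 1)) * \<bar>M - \<phi> l\<bar>"
      unfolding t_def by (intro mult_right_mono) auto
    also have "\<dots> = (e / 2) * (\<bar>M - \<phi> l\<bar> / (\<bar>M - \<phi> l\<bar> + 1))" by simp
    also have "\<dots> \<le> (e / 2) * 1" using assms(2) by (intro mult_left_mono) auto
    finally show ?thesis using assms(2) by simp
  qed
  have "eventually (\<lambda>n. dist (x n) l < t * \<rho>) sequentially" using assms(1) t \<rho> by (intro tendstoD) auto
  then show ?thesis
  proof eventually_elim
    case (elim n)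
    define z where "z = l + (1 / t) *\<^sub>R (x n - l)"
    have "dist z l = norm (x n - l) / t" unfolding z_def dist_norm using t by simp
    also have "\<dots> < \<rho>" using elim t by (simp add: dist_norm divide_less_eq mult.commute)
    finally have "\<phi> z \<le> M" by (rule \<rho>(2))
    have "x n = (1 - t) *\<^sub>R l + t *\<^sub>R z" unfolding z_def using t by (simp add: algebra_simps)
    then have "\<phi> (x n) \<le> (1 - t) * \<phi> l + t * \<phi> z" using convex_onD[OF cv, of t l z] t by simp
    also have "\<dots> \<le> (1 - t) * \<phi> l + t * M" using \<open>\<phi> z \<le> M\<close> t by (intro add_left_mono mult_left_mono) auto
    also have "\<dots> = \<phi> l + t * (M - \<phi> l)" by (simp add: algebra_simps)
    also have "\<dots> \<le> \<phi> l + t * \<bar>M - \<phi> l\<bar>" using t by (intro add_left_mono mult_left_mono) auto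
    finally show ?case using te by linarith
  qed
qed

lemma phi_lower_bound: "\<exists>b\<ge>0. \<forall>x. \<phi> x \<ge> \<phi> 0 - b * norm x"
proof -
  obtain \<rho> M where \<rho>: "\<rho> > 0" "\<And>y. dist y 0 < \<rho> \<Longrightarrow> \<phi> y \<le> M" using phi_local_bound[of 0] by blast
  define s where "s = \<rho> / 2"
  have s: "s > 0" "s < \<rho>" using \<rho> unfolding s_def by auto
  have M0: "\<phi> 0 \<le> M" using \<rho> by auto
  define b where "b = (M - \<phi> 0) / s"
  have b: "b \<ge> 0" using M0 s unfolding b_def by auto
  have "\<phi> x \<ge> \<phi> 0 - b * norm x" for x
  proof (cases "x = 0")
    case True then show ?thesis by simp
  next
    case False
    define n where "n = norm x"
    have n: "n > 0" using False unfolding n_def by simp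
    define y where "y = (- s / n) *\<^sub>R x"
    have "dist y 0 < \<rho>" unfolding y_def dist_norm n_def using s False by simp
    then have My: "\<phi> y \<le> M" by (rule \<rho>(2))
    define t where "t = n / (s + n)"
    have t: "0 \<le> t" "t \<le> 1" using n s unfolding t_def by auto
    have "(1 - t) *\<^sub>R x + t *\<^sub>R y = 0"
    proof -
      have "1 - t = s / (s + n)" unfolding t_def using n s by (simp add: field_simps)
      moreover have "t * (- s / n) = - (s / (s + n))" unfolding t_def using n s by (simp add: field_simps)
      ultimately show ?thesis unfolding y_def by (simp add: scaleR_scaleR)
    qed
    then have "\<phi> 0 \<le> (1 - t) * \<phi> x + t * \<phi> y" using convex_onD[OF cv t, of x y] by simp
    also have "\<dots> \<le> (1 - t) * \<phi> x + t * M" using My t by (intro add_left_mono mult_left_mono) auto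
    finally have ineq: "\<phi> 0 \<le> (1 - t) * \<phi> x + t * M" .
    have "s * \<phi> 0 \<le> s * \<phi> x + n * M - n * \<phi> 0"
    proof -
      have "(s + n) * \<phi> 0 \<le> (s + n) * ((1 - t) * \<phi> x + t * M)" using ineq n s by (intro mult_left_mono) auto
      also have "(s + n) * ((1 - t) * \<phi> x + t * M) = ((s + n) * (1 - t)) * \<phi> x + ((s + n) * t) * M"
        by (simp add: algebra_simps)
      also have "(s + n) * (1 - t) = s" unfolding t_def using n s by (simp add: field_simps)
      also have "(s + n) * t = n" unfolding t_def using n s by simp
      finally show ?thesis by (simp add: algebra_simps)
    qed
    moreover have "s * (\<phi> 0 - b * n) = s * \<phi> 0 - n * M + n * \<phi> 0"
      unfolding b_def using s by (simp add: field_simps)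
    ultimately have "s * (\<phi> 0 - b * n) \<le> s * \<phi> x" by linarith
    then show ?thesis using s unfolding n_def by simp
  qed
  then show ?thesis using b by blast
qed

end

lemma pm_apply:
  fixes A :: "'a::real_normed_vector \<Rightarrow> ('a \<Rightarrow>\<^sub>L real)"
  assumes pm: "pseudomonotone A" and w: "weakly_conv u w"
    and ls: "\<And>e. e > 0 \<Longrightarrow> eventually (\<lambda>n. blinfun_apply (A (u n)) (u n - w) < e) sequentially"
    and e: "e > 0"
  shows "eventually (\<lambda>n. blinfun_apply (A w) (w - v) - e < blinfun_apply (A (u n)) (u n - v)) sequentially"
proof -
  have "limsup (\<lambda>n. ereal (blinfun_apply (A (u n)) (u n - w))) \<le> 0"
    unfolding Limsup_le_iff
  proof (intro allI impI)
    fix y :: ereal assume y: "y > 0"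
    show "\<forall>\<^sub>F n in sequentially. ereal (blinfun_apply (A (u n)) (u n - w)) < y"
    proof (cases y)
      case (real r)
      then have "r > 0" using y by simp
      from ls[OF this] show ?thesis by eventually_elim (simp add: real)
    next
      case PInf then show ?thesis by simp
    next
      case MInf then show ?thesis using y by simp
    qed
  qed
  with pm w have "ereal (blinfun_apply (A w) (w - v)) \<le> liminf (\<lambda>n. ereal (blinfun_apply (A (u n)) (u n - v)))"
    unfolding pseudomonotone_def by blast
  then have "\<forall>y < ereal (blinfun_apply (A w) (w - v)). eventually (\<lambda>n. y < ereal (blinfun_apply (A (u n)) (u n - v))) sequentially"
    unfolding le_Liminf_iff by blast
  from this[rule_format, of "ereal (blinfun_apply (A w) (w - v) - e)"] e
  show ?thesis by simp
qed

lemma pm_bounded: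
  fixes A :: "'a::real_normed_vector \<Rightarrow> ('a \<Rightarrow>\<^sub>L real)"
  assumes "pseudomonotone A" "\<And>n. norm (u n) \<le> R"
  shows "\<exists>K. \<forall>n. norm (A (u n)) \<le> K"
proof -
  have "bounded (range u)" using assms(2) unfolding bounded_iff by blast
  then have "bounded (A ` range u)" using assms(1) unfolding pseudomonotone_def bounded_operator_def by blast
  then show ?thesis unfolding bounded_iff by auto
qed

lemma demicont:
  fixes A :: "'a::real_normed_vector \<Rightarrow> ('a \<Rightarrow>\<^sub>L real)"
  assumes pm: "pseudomonotone A" and u: "u \<longlonglongrightarrow> w"
  shows "(\<lambda>n. blinfun_apply (A (u n)) z) \<longlonglongrightarrow> blinfun_apply (A w) z"
proof -
  obtain R where R: "\<And>n. norm (u n) \<le> R" using convergent_imp_Bseq[of u] u unfolding Bseq_def convergent_def by auto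
  obtain K where K: "\<And>n. norm (A (u n)) \<le> K" using pm_bounded[of A u R] pm R by blast
  have K0: "K \<ge> 0" using K[of 0] norm_ge_zero[of "A (u 0)"] by linarith
  have small: "eventually (\<lambda>n. \<bar>blinfun_apply (A (u n)) (u n - w)\<bar> < e) sequentially" if e: "e > 0" for e
  proof -
    have "eventually (\<lambda>n. dist (u n) w < e / (K + 1)) sequentially"
      using u e K0 by (intro tendstoD) auto
    then show ?thesis
    proof eventually_elim
      case (elim n)
      have "\<bar>blinfun_apply (A (u n)) (u n - w)\<bar> \<le> norm (A (u n)) * norm (u n - w)"
        by (rule blinfun_apply_bound)
      also have "\<dots> \<le> K * (e / (K + 1))"
        using K[of n] elim K0 by (intro mult_mono) (auto simp: dist_norm)
      also have "\<dots> = e * (K / (K + 1))" by simp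
      also have "\<dots> < e * 1" using e K0 by (intro mult_strict_left_mono) auto
      finally show ?case by simp
    qed
  qed
  have wk: "weakly_conv u w" by (rule strong_imp_weak[OF u])
  have pa: "eventually (\<lambda>n. blinfun_apply (A w) (w - v) - e < blinfun_apply (A (u n)) (u n - v)) sequentially"
    if "e > 0" for v e
  proof (rule pm_apply[OF pm wk _ that])
    fix e :: real assume "e > 0"
    from small[OF this] show "eventually (\<lambda>n. blinfun_apply (A (u n)) (u n - w) < e) sequentially"
      by eventually_elim linarith
  qed
  show ?thesis
  proof (rule tendstoI)
    fix e :: real assume e: "e > 0"
    have e2: "e / 2 > 0" using e by simp
    have lo: "eventually (\<lambda>n. blinfun_apply (A w) z - e < blinfun_apply (A (u n)) z) sequentially"
      using pa[OF e2, of "w - z"] small[OF e2]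
    proof eventually_elim
      case (elim n)
      have "blinfun_apply (A (u n)) (u n - (w - z)) = blinfun_apply (A (u n)) (u n - w) + blinfun_apply (A (u n)) z"
        by (simp add: blinfun.diff_right blinfun.add_right algebra_simps)
      then show ?case using elim by simp
    qed
    have hi: "eventually (\<lambda>n. blinfun_apply (A (u n)) z < blinfun_apply (A w) z + e) sequentially"
      using pa[OF e2, of "w + z"] small[OF e2]
    proof eventually_elim
      case (elim n)
      have "blinfun_apply (A (u n)) (u n - (w + z)) = blinfun_apply (A (u n)) (u n - w) - blinfun_apply (A (u n)) z"
        by (simp add: blinfun.diff_right blinfun.add_right algebra_simps)
      moreover have "blinfun_apply (A w) (w - (w + z)) = - blinfun_apply (A w) z"
        by (simp add: blinfun.minus_right)
      ultimately show ?case using elim by simp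
    qed
    from lo hi show "eventually (\<lambda>n. dist (blinfun_apply (A (u n)) z) (blinfun_apply (A w) z) < e) sequentially"
      by eventually_elim (simp add: dist_real_def abs_less_iff)
  qed
qed

lemma minty:
  fixes A :: "'a::real_normed_vector \<Rightarrow> ('a \<Rightarrow>\<^sub>L real)"
  assumes pm: "pseudomonotone A" and C: "convex C" and uC: "u \<in> C" and cv: "convex_on UNIV \<phi>"
    and M: "\<And>z. z \<in> C \<Longrightarrow> blinfun_apply (A z - g) (z - u) + \<phi> z - \<phi> u \<ge> 0"
  shows "solves_VI A g \<phi> C u"
  unfolding solves_VI_def
proof (intro conjI ballI)
  show "u \<in> C" by (rule uC)
  fix z assume zC: "z \<in> C"
  define t where "t n = 1 / (real n + 1)" for n
  have t: "t n > 0" "t n \<le> 1" for n unfolding t_def by (auto simp: field_simps)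
  define zt where "zt n = u + t n *\<^sub>R (z - u)" for n
  have ztC: "zt n \<in> C" for n
  proof -
    have "zt n = (1 - t n) *\<^sub>R u + t n *\<^sub>R z" unfolding zt_def by (simp add: algebra_simps)
    then show ?thesis using convexD[OF C uC zC, of "1 - t n" "t n"] t[of n] by simp
  qed
  have ineq: "0 \<le> blinfun_apply (A (zt n) - g) (z - u) + \<phi> z - \<phi> u" for n
  proof -
    have "0 \<le> blinfun_apply (A (zt n) - g) (zt n - u) + \<phi> (zt n) - \<phi> u" using M[OF ztC] .
    moreover have "blinfun_apply (A (zt n) - g) (zt n - u) = t n * blinfun_apply (A (zt n) - g) (z - u)"
      unfolding zt_def by (simp add: blinfun.scaleR_right)
    moreover have "\<phi> (zt n) \<le> (1 - t n) * \<phi> u + t n * \<phi> z"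
    proof -
      have "zt n = (1 - t n) *\<^sub>R u + t n *\<^sub>R z" unfolding zt_def by (simp add: algebra_simps)
      then show ?thesis using convex_onD[OF cv, of "t n" u z] t[of n] by simp
    qed
    ultimately have "0 \<le> t n * (blinfun_apply (A (zt n) - g) (z - u) + \<phi> z - \<phi> u)"
      by (simp add: algebra_simps)
    then show ?thesis using t[of n] by (simp add: zero_le_mult_iff)
  qed
  have tl: "t \<longlonglongrightarrow> 0" unfolding t_def using LIMSEQ_inverse_real_of_nat by (simp add: inverse_eq_divide add.commute)
  have "zt \<longlonglongrightarrow> u + 0 *\<^sub>R (z - u)" unfolding zt_def by (intro tendsto_intros tl)
  then have ztl: "zt \<longlonglongrightarrow> u" by simp
  have "(\<lambda>n. blinfun_apply (A (zt n) - g) (z - u) + \<phi> z - \<phi> u) \<longlonglongrightarrow> blinfun_apply (A u - g) (z - u) + \<phi> z - \<phi> u"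
    unfolding minus_blinfun.rep_eq by (intro tendsto_intros demicont[OF pm ztl])
  then show "blinfun_apply (A u - g) (z - u) + \<phi> z - \<phi> u \<ge> 0"
    by (rule LIMSEQ_le_const) (use ineq in auto)
qed

lemma fun_sum_indicator:
  assumes "finite I"
  shows "(\<Sum>i\<in>I. c i *\<^sub>R (\<lambda>j. if j = i then (1::real) else 0)) = (\<lambda>j. if j \<in> I then c j else 0)"
  using assms
proof (induction I rule: finite_induct)
  case empty then show ?case by (simp add: zero_fun_def)
next
  case (insert a F)
  then show ?case by (auto simp: plus_fun_def scaleR_fun_def fun_eq_iff)
qed

lemma concave_alt:
  fixes h :: "'i \<Rightarrow> 'x::real_vector \<Rightarrow> real"
  assumes I: "finite I" "I \<noteq> {}" and X: "convex X" "X \<noteq> {}"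
    and conc: "\<And>i x y t. i \<in> I \<Longrightarrow> x \<in> X \<Longrightarrow> y \<in> X \<Longrightarrow> 0 \<le> t \<Longrightarrow> t \<le> 1 \<Longrightarrow>
       (1 - t) * h i x + t * h i y \<le> h i ((1 - t) *\<^sub>R x + t *\<^sub>R y)"
    and c: "c < 0" and neg: "\<And>x. x \<in> X \<Longrightarrow> \<exists>i\<in>I. h i x \<le> c"
  shows "\<exists>\<mu>. (\<forall>i\<in>I. \<mu> i \<ge> 0) \<and> sum \<mu> I = 1 \<and> (\<forall>x\<in>X. (\<Sum>i\<in>I. \<mu> i * h i x) < 0)"
proof -
  define h' where "h' i x = h i x - c / 2" for i x
  have neg': "\<exists>i\<in>I. h' i x < 0" if "x \<in> X" for x using neg[OF that] c unfolding h'_def by force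
  have conc': "(1 - t) * h' i x + t * h' i y \<le> h' i ((1 - t) *\<^sub>R x + t *\<^sub>R y)"
    if "i \<in> I" "x \<in> X" "y \<in> X" "0 \<le> t" "t \<le> 1" for i x y t
  proof -
    have "(1 - t) * h' i x + t * h' i y = (1 - t) * h i x + t * h i y - c / 2"
      unfolding h'_def by (simp add: algebra_simps add_divide_distrib diff_divide_distrib)
    moreover have "h' i ((1 - t) *\<^sub>R x + t *\<^sub>R y) = h i ((1 - t) *\<^sub>R x + t *\<^sub>R y) - c / 2"
      unfolding h'_def by simp
    ultimately show ?thesis using conc[OF that] by linarith
  qed
  define mx where "mx y t x = Max ((\<lambda>i. y i - t * h' i x) ` I)" for y :: "'i \<Rightarrow> real" and t x
  have mx_ge: "y i - t * h' i x \<le> mx y t x" if "i \<in> I" for y t x i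
    unfolding mx_def using I that by (intro Max_ge) auto
  have mx_le: "mx y t x \<le> b" if "\<And>i. i \<in> I \<Longrightarrow> y i - t * h' i x \<le> b" for y t x b
    unfolding mx_def using I that by (intro Max.boundedI) auto
  have mx_lb: "Min (y ` I) \<le> mx y t x" if tx: "t > 0" "x \<in> X" for y t x
  proof -
    obtain i where i: "i \<in> I" "h' i x < 0" using neg'[OF tx(2)] by blast
    have "Min (y ` I) \<le> y i" using I i by (intro Min_le) auto
    also have "\<dots> \<le> y i - t * h' i x" using mult_pos_neg[OF tx(1) i(2)] by simp
    also have "\<dots> \<le> mx y t x" by (rule mx_ge[OF i(1)])
    finally show ?thesis .
  qed
  obtain x0 where x0: "x0 \<in> X" using X by blast
  define S where "S y = {mx y t x | t x. t > 0 \<and> x \<in> X}" for y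
  define q where "q y = Inf (S y)" for y
  have Sne: "S y \<noteq> {}" for y unfolding S_def using x0 zero_less_one by blast
  have Sbdd: "bdd_below (S y)" for y unfolding S_def bdd_below_def using mx_lb by blast
  have qle: "q y \<le> mx y t x" if "t > 0" "x \<in> X" for y t x
    unfolding q_def by (rule cInf_lower[OF _ Sbdd]) (use that in \<open>auto simp: S_def\<close>)
  have qge: "b \<le> q y" if "\<And>t x. t > 0 \<Longrightarrow> x \<in> X \<Longrightarrow> b \<le> mx y t x" for y b
    unfolding q_def by (rule cInf_greatest[OF Sne]) (use that in \<open>auto simp: S_def\<close>)
  have qmin: "Min (y ` I) \<le> q y" for y by (rule qge) (rule mx_lb)
  define B where "B = Max ((\<lambda>i. \<bar>h' i x0\<bar>) ` I)"
  have qmax: "q y \<le> Max (y ` I)" for y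
  proof (rule field_le_epsilon)
    fix e :: real assume e: "e > 0"
    have B0: "B \<ge> 0" unfolding B_def using I by (meson Max_ge_iff abs_ge_zero ex_in_conv finite_imageI imageI image_is_empty)
    define t where "t = e / (B + 1)"
    have t: "t > 0" unfolding t_def using e B0 by simp
    have "q y \<le> mx y t x0" by (rule qle[OF t x0])
    also have "\<dots> \<le> Max (y ` I) + e"
    proof (rule mx_le)
      fix i assume i: "i \<in> I"
      have "y i \<le> Max (y ` I)" using I i by (intro Max_ge) auto
      moreover have "- (t * h' i x0) \<le> t * \<bar>h' i x0\<bar>" using t by (simp add: abs_if)
      moreover have "\<bar>h' i x0\<bar> \<le> B" unfolding B_def using I i by (intro Max_ge) auto
      then have "t * \<bar>h' i x0\<bar> \<le> t * B" using t by (intro mult_left_mono) auto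
      moreover have "t * B \<le> e" unfolding t_def using e B0 by (simp add: field_simps)
      ultimately show "y i - t * h' i x0 \<le> Max (y ` I) + e" by linarith
    qed
    finally show "q y \<le> Max (y ` I) + e" .
  qed
  have q0: "q 0 = 0" using qmin[of 0] qmax[of 0] I by (simp add: zero_fun_def)
  have sub: "q (y + y') \<le> q y + q y'" for y y'
  proof -
    have key: "q (y + y') \<le> mx y t x + mx y' t' x'"
      if tx: "t > 0" "x \<in> X" "t' > 0" "x' \<in> X" for t x t' x'
    proof -
      define s where "s = t' / (t + t')"
      have s: "0 \<le> s" "s \<le> 1" using tx unfolding s_def by auto
      define x'' where "x'' = (1 - s) *\<^sub>R x + s *\<^sub>R x'"
      have x'': "x'' \<in> X" unfolding x''_def using convexD[OF X(1) tx(2,4), of "1 - s" s] s by simp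
      have tt: "t + t' > 0" using tx by simp
      have "q (y + y') \<le> mx (y + y') (t + t') x''" by (rule qle[OF tt x''])
      also have "\<dots> \<le> mx y t x + mx y' t' x'"
      proof (rule mx_le)
        fix i assume i: "i \<in> I"
        have "(1 - s) * h' i x + s * h' i x' \<le> h' i x''" unfolding x''_def by (rule conc'[OF i tx(2,4) s])
        then have "(t + t') * ((1 - s) * h' i x + s * h' i x') \<le> (t + t') * h' i x''"
          using tt by (intro mult_left_mono) auto
        moreover have "(t + t') * ((1 - s) * h' i x + s * h' i x') = t * h' i x + t' * h' i x'"
        proof -
          have e1: "(t + t') * (1 - s) = t" "(t + t') * s = t'" unfolding s_def using tt by (auto simp: field_simps)
          have "(t + t') * ((1 - s) * h' i x + s * h' i x') = ((t + t') * (1 - s)) * h' i x + ((t + t') * s) * h' i x'"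
            by (simp add: algebra_simps)
          then show ?thesis unfolding e1 .
        qed
        ultimately have "t * h' i x + t' * h' i x' \<le> (t + t') * h' i x''" by simp
        moreover have "y i - t * h' i x \<le> mx y t x" by (rule mx_ge[OF i])
        moreover have "y' i - t' * h' i x' \<le> mx y' t' x'" by (rule mx_ge[OF i])
        ultimately show "(y + y') i - (t + t') * h' i x'' \<le> mx y t x + mx y' t' x'"
          by (simp add: plus_fun_def algebra_simps)
      qed
      finally show ?thesis .
    qed
    have "q (y + y') - q y' \<le> q y"
    proof (rule qge)
      fix t :: real and x assume tx: "t > 0" "x \<in> X"
      have "q (y + y') - mx y t x \<le> q y'"
      proof (rule qge)
        fix t' :: real and x' assume "t' > 0" "x' \<in> X"
        from key[OF tx this] show "q (y + y') - mx y t x \<le> mx y' t' x'" by linarith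
      qed
      then show "q (y + y') - q y' \<le> mx y t x" by linarith
    qed
    then show ?thesis by linarith
  qed
  have mx_sc: "mx (s *\<^sub>R y) (s * t) x = s * mx y t x" if s: "s > 0" for s y t x
  proof -
    have "s * mx y t x = Max (((*) s) ` ((\<lambda>i. y i - t * h' i x) ` I))"
      unfolding mx_def using I s by (intro mono_Max_commute) (auto simp: mono_def)
    also have "\<dots> = mx (s *\<^sub>R y) (s * t) x"
      unfolding mx_def image_image by (simp add: scaleR_fun_def algebra_simps)
    finally show ?thesis by simp
  qed
  have hom: "q (s *\<^sub>R y) = s * q y" if "s \<ge> 0" for s y
  proof (cases "s = 0")
    case True then show ?thesis using q0 by (simp add: zero_fun_def scaleR_fun_def)
  next
    case False
    then have s: "s > 0" using that by simp
    have a: "q (s *\<^sub>R y) \<le> s * q y"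
    proof -
      have "q (s *\<^sub>R y) / s \<le> q y"
      proof (rule qge)
        fix t :: real and x assume tx: "t > 0" "x \<in> X"
        have "q (s *\<^sub>R y) \<le> mx (s *\<^sub>R y) (s * t) x" using s tx by (intro qle) auto
        also have "\<dots> = s * mx y t x" by (rule mx_sc[OF s])
        finally show "q (s *\<^sub>R y) / s \<le> mx y t x" using s by (simp add: field_simps)
      qed
      then show ?thesis using s by (simp add: field_simps)
    qed
    have b: "s * q y \<le> q (s *\<^sub>R y)"
    proof (rule qge)
      fix t :: real and x assume tx: "t > 0" "x \<in> X"
      have "q y \<le> mx y (t / s) x" using s tx by (intro qle) auto
      moreover have "mx (s *\<^sub>R y) (s * (t / s)) x = s * mx y (t / s) x" by (rule mx_sc[OF s])
      ultimately show "s * q y \<le> mx (s *\<^sub>R y) t x" using s by (simp add: mult_left_mono)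
    qed
    from a b show ?thesis by linarith
  qed
  have sl: "sublin q" unfolding sublin_def using sub hom by blast
  define one :: "'i \<Rightarrow> real" where "one = (\<lambda>j. if j \<in> I then (1::real) else 0)"
  define ee where "ee i = (\<lambda>j. if j = i then (1::real) else 0)" for i :: 'i
  have "\<exists>F. linear F \<and> F one = 1 \<and> (\<forall>x. F x \<le> q x)"
  proof (rule HB1[OF sl])
    fix a :: real
    have "Min ((a *\<^sub>R one) ` I) = a"
    proof -
      have "(a *\<^sub>R one) ` I = {a}" using I unfolding one_def by (auto simp: scaleR_fun_def)
      then show ?thesis by simp
    qed
    then show "a * 1 \<le> q (a *\<^sub>R one)" using qmin[of "a *\<^sub>R one"] by simp
  qed
  then obtain F where F: "linear F" "F one = 1" "\<And>x. F x \<le> q x" by blast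
  define \<mu> where "\<mu> i = F (ee i)" for i
  have \<mu>pos: "\<mu> i \<ge> 0" if i: "i \<in> I" for i
  proof -
    have "F (- ee i) \<le> q (- ee i)" by (rule F(3))
    also have "\<dots> \<le> Max ((- ee i) ` I)" by (rule qmax)
    also have "\<dots> \<le> 0" using I by (intro Max.boundedI) (auto simp: ee_def split: if_splits)
    finally show ?thesis unfolding \<mu>_def using linear_neg[OF F(1)] by simp
  qed
  have Fsum: "F (\<lambda>j. if j \<in> I then c j else 0) = (\<Sum>i\<in>I. c i * \<mu> i)" for c
  proof -
    have "(\<lambda>j. if j \<in> I then c j else 0) = (\<Sum>i\<in>I. c i *\<^sub>R ee i)"
      unfolding ee_def using fun_sum_indicator[OF I(1)] by simp
    then show ?thesis unfolding \<mu>_def by (simp add: linear_sum[OF F(1)] linear_scale[OF F(1)])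
  qed
  have "sum \<mu> I = 1"
    using Fsum[of "\<lambda>_. 1"] F(2) unfolding one_def by simp
  moreover have "(\<Sum>i\<in>I. \<mu> i * h i x) < 0" if x: "x \<in> X" for x
  proof -
    define y where "y = (\<lambda>j. if j \<in> I then h' j x else 0)"
    have "F y \<le> q y" by (rule F(3))
    also have "\<dots> \<le> mx y 1 x" by (rule qle) (use x in auto)
    also have "\<dots> \<le> 0" by (rule mx_le) (simp add: y_def)
    finally have "(\<Sum>i\<in>I. h' i x * \<mu> i) \<le> 0" using Fsum[of "\<lambda>j. h' j x"] unfolding y_def by simp
    moreover have "(\<Sum>i\<in>I. h' i x * \<mu> i) = (\<Sum>i\<in>I. \<mu> i * h i x) - c / 2 * sum \<mu> I"
      unfolding h'_def by (simp add: algebra_simps sum_subtractf sum_distrib_left)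
    ultimately show ?thesis using \<open>sum \<mu> I = 1\<close> c by simp
  qed
  ultimately show ?thesis using \<mu>pos by blast
qed

lemma norm_sq_convex:
  fixes a b :: "'a::real_normed_vector"
  assumes "0 \<le> t" "t \<le> 1"
  shows "(norm ((1 - t) *\<^sub>R a + t *\<^sub>R b))\<^sup>2 \<le> (1 - t) * (norm a)\<^sup>2 + t * (norm b)\<^sup>2"
proof -
  have "norm ((1 - t) *\<^sub>R a + t *\<^sub>R b) \<le> norm ((1 - t) *\<^sub>R a) + norm (t *\<^sub>R b)" by (rule norm_triangle_ineq)
  also have "\<dots> = (1 - t) * norm a + t * norm b" using assms by simp
  finally have n: "norm ((1 - t) *\<^sub>R a + t *\<^sub>R b) \<le> (1 - t) * norm a + t * norm b" .
  have "(norm ((1 - t) *\<^sub>R a + t *\<^sub>R b))\<^sup>2 \<le> ((1 - t) * norm a + t * norm b)\<^sup>2"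
    using n by (intro power_mono) auto
  also have "\<dots> = (1 - t) * (norm a)\<^sup>2 + t * (norm b)\<^sup>2 - t * (1 - t) * (norm a - norm b)\<^sup>2"
    by (simp add: power2_eq_square algebra_simps)
  also have "\<dots> \<le> (1 - t) * (norm a)\<^sup>2 + t * (norm b)\<^sup>2" using assms by simp
  finally show ?thesis .
qed

context
  fixes A :: "'a::banach \<Rightarrow> ('a \<Rightarrow>\<^sub>L real)" and m :: real and g :: "'a \<Rightarrow>\<^sub>L real" and \<phi> :: "'a \<Rightarrow> real"
  assumes pm: "pseudomonotone A" and m: "m > 0" and sm: "strongly_monotone m A"
    and cv: "convex_on UNIV \<phi>" and lsc: "lower_semicont \<phi>"
begin

definition hz :: "'a \<Rightarrow> 'a \<Rightarrow> real" where
  "hz z x = blinfun_apply (A z - g) (z - x) + \<phi> z - \<phi> x - m * (norm (z - x))\<^sup>2"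

lemma hz_concave:
  assumes "0 \<le> t" "t \<le> 1"
  shows "(1 - t) * hz z x + t * hz z y \<le> hz z ((1 - t) *\<^sub>R x + t *\<^sub>R y)"
proof -
  have zz: "z - ((1 - t) *\<^sub>R x + t *\<^sub>R y) = (1 - t) *\<^sub>R (z - x) + t *\<^sub>R (z - y)"
    by (simp add: algebra_simps)
  have lin: "blinfun_apply (A z - g) (z - ((1 - t) *\<^sub>R x + t *\<^sub>R y)) =
     (1 - t) * blinfun_apply (A z - g) (z - x) + t * blinfun_apply (A z - g) (z - y)"
    unfolding zz by (simp add: blinfun.add_right blinfun.scaleR_right)
  have ph: "\<phi> ((1 - t) *\<^sub>R x + t *\<^sub>R y) \<le> (1 - t) * \<phi> x + t * \<phi> y"
    using convex_onD[OF cv assms] by simp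
  have nq: "(norm (z - ((1 - t) *\<^sub>R x + t *\<^sub>R y)))\<^sup>2 \<le> (1 - t) * (norm (z - x))\<^sup>2 + t * (norm (z - y))\<^sup>2"
    unfolding zz by (rule norm_sq_convex[OF assms])
  have "m * (norm (z - ((1 - t) *\<^sub>R x + t *\<^sub>R y)))\<^sup>2 \<le> m * ((1 - t) * (norm (z - x))\<^sup>2 + t * (norm (z - y))\<^sup>2)"
    using nq m by (intro mult_left_mono) auto
  then show ?thesis unfolding hz_def lin using ph by (simp add: algebra_simps)
qed

lemma df_sum:
  assumes Z: "finite Z" "Z \<noteq> {}" and \<mu>: "\<And>z. z \<in> Z \<Longrightarrow> \<mu> z \<ge> 0" "sum \<mu> Z = 1"
  shows "(\<Sum>z\<in>Z. \<mu> z * hz z (\<Sum>z\<in>Z. \<mu> z *\<^sub>R z)) \<ge> 0"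
proof -
  define u where "u = (\<Sum>z\<in>Z. \<mu> z *\<^sub>R z)"
  have d0: "(\<Sum>z\<in>Z. \<mu> z *\<^sub>R (z - u)) = 0"
    by (simp add: scaleR_diff_right sum_subtractf u_def flip: scaleR_sum_left) (simp add: \<mu>(2))
  have jensen: "\<phi> u \<le> (\<Sum>z\<in>Z. \<mu> z * \<phi> z)"
    unfolding u_def by (rule convex_on_sum[OF Z cv \<mu>(2)]) (use \<mu> in auto)
  have lin0: "(\<Sum>z\<in>Z. \<mu> z * blinfun_apply f (z - u)) = 0" for f :: "'a \<Rightarrow>\<^sub>L real"
  proof -
    have "(\<Sum>z\<in>Z. \<mu> z * blinfun_apply f (z - u)) = blinfun_apply f (\<Sum>z\<in>Z. \<mu> z *\<^sub>R (z - u))"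
      by (simp add: blinfun.sum_right blinfun.scaleR_right)
    then show ?thesis using d0 by simp
  qed
  have mono: "\<mu> z * blinfun_apply (A z - g) (z - u) \<ge> \<mu> z * (m * (norm (z - u))\<^sup>2) + \<mu> z * blinfun_apply (A u - g) (z - u)"
    if "z \<in> Z" for z
  proof -
    have "m * (norm (z - u))\<^sup>2 \<le> blinfun_apply (A z - A u) (z - u)" using sm unfolding strongly_monotone_def by blast
    then have "m * (norm (z - u))\<^sup>2 + blinfun_apply (A u - g) (z - u) \<le> blinfun_apply (A z - g) (z - u)"
      by (simp add: minus_blinfun.rep_eq)
    then show ?thesis using \<mu>(1)[OF that] by (simp add: distrib_left[symmetric] mult_left_mono)
  qed
  have "(\<Sum>z\<in>Z. \<mu> z * hz z u) = (\<Sum>z\<in>Z. \<mu> z * blinfun_apply (A z - g) (z - u)) + (\<Sum>z\<in>Z. \<mu> z * \<phi> z)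
      - \<phi> u * sum \<mu> Z - (\<Sum>z\<in>Z. \<mu> z * (m * (norm (z - u))\<^sup>2))"
    unfolding hz_def by (simp add: algebra_simps sum.distrib sum_subtractf sum_distrib_left sum_distrib_right)
  also have "\<dots> \<ge> (\<Sum>z\<in>Z. \<mu> z * (m * (norm (z - u))\<^sup>2) + \<mu> z * blinfun_apply (A u - g) (z - u)) + \<phi> u
      - \<phi> u - (\<Sum>z\<in>Z. \<mu> z * (m * (norm (z - u))\<^sup>2))"
  proof -
    have "(\<Sum>z\<in>Z. \<mu> z * (m * (norm (z - u))\<^sup>2) + \<mu> z * blinfun_apply (A u - g) (z - u))
        \<le> (\<Sum>z\<in>Z. \<mu> z * blinfun_apply (A z - g) (z - u))"
      by (rule sum_mono) (rule mono)
    then show ?thesis using jensen \<mu>(2) by simp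
  qed
  also have "(\<Sum>z\<in>Z. \<mu> z * (m * (norm (z - u))\<^sup>2) + \<mu> z * blinfun_apply (A u - g) (z - u)) + \<phi> u
      - \<phi> u - (\<Sum>z\<in>Z. \<mu> z * (m * (norm (z - u))\<^sup>2)) = 0"
    using lin0[of "A u - g"] by (simp add: sum.distrib)
  finally show ?thesis unfolding u_def by simp
qed

lemma df:
  assumes Z: "finite Z" "Z \<noteq> {}"
  shows "\<exists>u\<in>convex hull Z. \<forall>z\<in>Z. hz z u \<ge> 0"
proof -
  have approx: "\<exists>x\<in>convex hull Z. \<forall>z\<in>Z. hz z x > c" if c: "c < 0" for c
  proof (rule ccontr)
    assume "\<not> ?thesis"
    then have neg: "\<And>x. x \<in> convex hull Z \<Longrightarrow> \<exists>z\<in>Z. hz z x \<le> c" by (auto simp: not_less)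
    have "\<exists>\<mu>. (\<forall>i\<in>Z. \<mu> i \<ge> 0) \<and> sum \<mu> Z = 1 \<and> (\<forall>x\<in>convex hull Z. (\<Sum>i\<in>Z. \<mu> i * hz i x) < 0)"
    proof (rule concave_alt[OF Z convex_convex_hull _ _ c neg])
      show "convex hull Z \<noteq> {}" using Z by simp
      show "(1 - t) * hz i x + t * hz i y \<le> hz i ((1 - t) *\<^sub>R x + t *\<^sub>R y)" if "0 \<le> t" "t \<le> 1" for i x y t
        using hz_concave[OF that] .
    qed
    then obtain \<mu> where \<mu>: "\<And>i. i \<in> Z \<Longrightarrow> \<mu> i \<ge> 0" "sum \<mu> Z = 1"
      "\<And>x. x \<in> convex hull Z \<Longrightarrow> (\<Sum>i\<in>Z. \<mu> i * hz i x) < 0" by blast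
    have "(\<Sum>z\<in>Z. \<mu> z *\<^sub>R z) \<in> convex hull Z"
      unfolding convex_hull_finite[OF Z(1)] using \<mu>(1,2) by blast
    from \<mu>(3)[OF this] df_sum[OF Z \<mu>(1,2)] show False by simp
  qed
  have "\<forall>k. \<exists>x\<in>convex hull Z. \<forall>z\<in>Z. hz z x > - 1 / (real k + 1)"
    using approx by (simp add: approx)
  then obtain x where x: "\<And>k. x k \<in> convex hull Z" "\<And>k z. z \<in> Z \<Longrightarrow> hz z (x k) > - 1 / (real k + 1)"
    by metis
  have "seq_compact (convex hull Z)" by (rule compact_imp_seq_compact[OF finite_imp_compact_convex_hull[OF Z(1)]])
  from seq_compactE[OF this] x(1) obtain l r where lr: "l \<in> convex hull Z" "strict_mono r" "(x \<circ> r) \<longlonglongrightarrow> l"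
    by blast
  have "hz z l \<ge> 0" if zZ: "z \<in> Z" for z
  proof (rule field_le_epsilon)
    fix e :: real assume e: "e > 0"
    define cz where "cz y = blinfun_apply (A z - g) (z - y) - m * (norm (z - y))\<^sup>2" for y
    have czl: "(\<lambda>k. cz ((x \<circ> r) k)) \<longlonglongrightarrow> cz l" unfolding cz_def by (intro tendsto_intros lr(3))
    have ev1: "eventually (\<lambda>k. \<bar>cz ((x \<circ> r) k) - cz l\<bar> < e / 3) sequentially"
      using czl e unfolding tendsto_iff dist_real_def by (meson divide_pos_pos zero_less_numeral)
    have ev2: "eventually (\<lambda>k. \<phi> l - e / 3 < \<phi> ((x \<circ> r) k)) sequentially"
      using lsc_seq[OF lsc lr(3)] e by simp
    have "(\<lambda>k. 1 / (real (r k) + 1)) \<longlonglongrightarrow> 0"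
    proof -
      have "(\<lambda>k. 1 / (real k + 1)) \<longlonglongrightarrow> 0"
        using LIMSEQ_inverse_real_of_nat by (simp add: inverse_eq_divide add.commute)
      from LIMSEQ_subseq_LIMSEQ[OF this lr(2)] show ?thesis by (simp add: o_def)
    qed
    from tendstoD[OF this, of "e / 3"] e have ev3: "eventually (\<lambda>k. dist (1 / (real (r k) + 1)) 0 < e / 3) sequentially"
      by simp
    from ev1 ev2 ev3 have "eventually (\<lambda>k. - e \<le> hz z l) sequentially"
    proof eventually_elim
      case (elim k)
      have h: "hz z (x (r k)) > - 1 / (real (r k) + 1)" using x(2)[OF zZ] .
      have "hz z (x (r k)) = \<phi> z - \<phi> (x (r k)) + cz (x (r k))" unfolding hz_def cz_def by simp
      moreover have "hz z l = \<phi> z - \<phi> l + cz l" unfolding hz_def cz_def by simp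
      moreover have "\<bar>cz (x (r k)) - cz l\<bar> < e / 3" using elim(1) by (simp add: o_def)
      then have "cz (x (r k)) - cz l < e / 3" using abs_less_iff[THEN iffD1] by fastforce
      moreover have "1 / (real (r k) + 1) < e / 3" using elim(3) unfolding dist_real_def by simp
      moreover have "\<phi> l - e / 3 < \<phi> (x (r k))" using elim(2) by (simp add: o_def)
      moreover have "- 1 / (real (r k) + 1) = - (1 / (real (r k) + 1))" by simp
      ultimately show ?case using h by linarith
    qed
    then have "- e \<le> hz z l" by (rule eventually_happens'[OF trivial_limit_sequentially, THEN exE]) auto
    then show "0 \<le> hz z l + e" by simp
  qed
  then show ?thesis using lr(1) by blast
qed

lemma hz_usc:
  assumes "u \<longlonglongrightarrow> l" "e > 0"
  shows "eventually (\<lambda>n. hz z (u n) < hz z l + e) sequentially"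
proof -
  define cz where "cz y = blinfun_apply (A z - g) (z - y) - m * (norm (z - y))\<^sup>2" for y
  have czl: "(\<lambda>k. cz (u k)) \<longlonglongrightarrow> cz l" unfolding cz_def by (intro tendsto_intros assms(1))
  have e2: "e / 2 > 0" using assms(2) by simp
  from tendstoD[OF czl e2] have ev1: "eventually (\<lambda>k. dist (cz (u k)) (cz l) < e / 2) sequentially" .
  have ev2: "eventually (\<lambda>k. \<phi> l - e / 2 < \<phi> (u k)) sequentially"
    using lsc_seq[OF lsc assms(1) e2] .
  from ev1 ev2 show ?thesis
  proof eventually_elim
    case (elim k)
    have "cz (u k) - cz l < e / 2" using elim(1) unfolding dist_real_def using abs_less_iff[THEN iffD1] by fastforce
    moreover have "hz z (u k) = \<phi> z - \<phi> (u k) + cz (u k)" unfolding hz_def cz_def by simp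
    moreover have "hz z l = \<phi> z - \<phi> l + cz l" unfolding hz_def cz_def by simp
    ultimately show ?case using elim(2) by linarith
  qed
qed

lemma hz_closed: "closed {u. 0 \<le> hz z u}"
  unfolding closed_sequential_limits
proof (intro allI impI)
  fix u l assume ul: "(\<forall>n. u n \<in> {u. 0 \<le> hz z u}) \<and> u \<longlonglongrightarrow> l"
  have "0 \<le> hz z l + e" if e: "e > 0" for e
  proof -
    from hz_usc[OF conjunct2[OF ul] e, of z] obtain N where "\<forall>n\<ge>N. hz z (u n) < hz z l + e"
      unfolding eventually_sequentially by blast
    then have "hz z (u N) < hz z l + e" by simp
    moreover have "0 \<le> hz z (u N)" using ul by auto
    ultimately show ?thesis by linarith
  qed
  then show "l \<in> {u. 0 \<le> hz z u}" using field_le_epsilon by force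
qed

lemma hz_convex: "convex {u. 0 \<le> hz z u}"
proof (rule convexI)
  fix x y and u v :: real assume xy: "x \<in> {u. 0 \<le> hz z u}" "y \<in> {u. 0 \<le> hz z u}" and uv: "0 \<le> u" "0 \<le> v" "u + v = 1"
  have uu: "u = 1 - v" using uv by simp
  have "0 \<le> (1 - v) * hz z x + v * hz z y" using xy uv by (simp add: uu)
  also have "\<dots> \<le> hz z ((1 - v) *\<^sub>R x + v *\<^sub>R y)" using hz_concave uv by simp
  finally show "u *\<^sub>R x + v *\<^sub>R y \<in> {u. 0 \<le> hz z u}" by (simp add: uu)
qed

lemma vi_exists:
  assumes refl: "reflexive_space TYPE('a)" and C: "closed C" "convex C" "C \<noteq> {}"
  shows "\<exists>u. solves_VI A g \<phi> C u"
proof -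
  obtain z0 where z0: "z0 \<in> C" using C(3) by blast
  obtain b where b: "b \<ge> 0" "\<And>x. \<phi> x \<ge> \<phi> 0 - b * norm x" using phi_lower_bound[OF cv lsc] by blast
  define P where "P = norm (A z0 - g) + b"
  define Q where "Q = \<phi> z0 - \<phi> 0 + b * norm z0"
  define R where "R = norm z0 + 1 + (P + \<bar>Q\<bar>) / m"
  have P0: "P \<ge> 0" unfolding P_def using b by simp
  have bound: "norm u \<le> R" if hu: "0 \<le> hz z0 u" for u
  proof -
    define d where "d = norm (z0 - u)"
    have d0: "d \<ge> 0" unfolding d_def by simp
    have l1: "blinfun_apply (A z0 - g) (z0 - u) \<le> norm (A z0 - g) * d"
      unfolding d_def using blinfun_apply_bound[of "A z0 - g" "z0 - u"] by linarith
    have "norm u \<le> norm z0 + d" unfolding d_def using norm_triangle_ineq[of z0 "u - z0"]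
      by (simp add: norm_minus_commute)
    then have "b * norm u \<le> b * (norm z0 + d)" using b(1) by (rule mult_left_mono)
    then have l2: "- \<phi> u \<le> - \<phi> 0 + b * (norm z0 + d)" using b(2)[of u] by linarith
    have "m * d\<^sup>2 \<le> blinfun_apply (A z0 - g) (z0 - u) + \<phi> z0 - \<phi> u" using hu unfolding hz_def d_def by simp
    also have "\<dots> \<le> P * d + Q" using l1 l2 unfolding P_def Q_def by (simp add: algebra_simps)
    finally have md: "m * d\<^sup>2 \<le> P * d + Q" .
    have "d \<le> 1 + (P + \<bar>Q\<bar>) / m"
    proof (cases "d \<le> 1")
      case True then show ?thesis using P0 m by (simp add: add_increasing2)
    next
      case False
      then have "\<bar>Q\<bar> * 1 \<le> \<bar>Q\<bar> * d" by (intro mult_left_mono) auto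
      then have "Q \<le> \<bar>Q\<bar> * d" using abs_ge_self[of Q] by linarith
      with md have "m * d * d \<le> (P + \<bar>Q\<bar>) * d" by (simp add: power2_eq_square algebra_simps)
      then have "m * d \<le> P + \<bar>Q\<bar>" using False by simp
      then have "d \<le> (P + \<bar>Q\<bar>) / m" using m by (simp add: field_simps)
      then show ?thesis by simp
    qed
    with \<open>norm u \<le> norm z0 + d\<close> show ?thesis unfolding R_def by simp
  qed
  define K where "K z = {u \<in> C. norm u \<le> R \<and> 0 \<le> hz z u}" for z
  have Keq: "K z = C \<inter> cball 0 R \<inter> {u. 0 \<le> hz z u}" for z unfolding K_def by auto
  have Kprops: "closed K' \<and> convex K' \<and> K' \<subseteq> cball 0 R" if K'C: "K' \<in> K ` C" for K'
  proof -
    obtain z where "K' = K z" using K'C by blast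
    then show ?thesis unfolding Keq
      using C(1,2) hz_closed[of z] hz_convex[of z] by (auto intro!: closed_Int convex_Int)
  qed
  have fip: "\<Inter>\<F> \<noteq> {}" if F: "finite \<F>" "\<F> \<subseteq> K ` C" for \<F>
  proof -
    from finite_subset_image[OF F(1) F(2)] obtain Z' where Z': "Z' \<subseteq> C" "finite Z'" "\<F> = K ` Z'" by blast
    define Z where "Z = insert z0 Z'"
    have Z: "finite Z" "Z \<noteq> {}" "Z \<subseteq> C" unfolding Z_def using Z' z0 by auto
    from df[OF Z(1,2)] obtain u where u: "u \<in> convex hull Z" "\<And>z. z \<in> Z \<Longrightarrow> 0 \<le> hz z u" by blast
    have uC: "u \<in> C" using u(1) hull_minimal[of Z C convex] Z(3) C(2) by blast
    have "norm u \<le> R" using bound u(2) unfolding Z_def by blast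
    then have "u \<in> K z" if "z \<in> Z'" for z using uC u(2) that unfolding K_def Z_def by blast
    then show ?thesis using Z'(3) by blast
  qed
  from fip_convex[OF refl Kprops fip] obtain u where u: "u \<in> \<Inter>(K ` C)" by blast
  have uC: "u \<in> C" using u z0 unfolding K_def by blast
  show ?thesis
  proof (rule exI, rule minty[OF pm C(2) uC cv])
    fix z assume "z \<in> C"
    then have "0 \<le> hz z u" using u unfolding K_def by blast
    moreover have "0 \<le> m * (norm (z - u))\<^sup>2" using m by simp
    ultimately show "0 \<le> blinfun_apply (A z - g) (z - u) + \<phi> z - \<phi> u" unfolding hz_def by linarith
  qed
qed

end

lemma quad_bound:
  fixes m d P Q :: real
  assumes "m > 0" "P \<ge> 0" "d \<ge> 0" "m * d\<^sup>2 \<le> P * d + Q"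
  shows "d \<le> 1 + (P + \<bar>Q\<bar>) / m"
proof (cases "d \<le> 1")
  case True then show ?thesis using assms by (simp add: add_increasing2)
next
  case False
  then have "\<bar>Q\<bar> * 1 \<le> \<bar>Q\<bar> * d" by (intro mult_left_mono) auto
  then have "Q \<le> \<bar>Q\<bar> * d" using abs_ge_self[of Q] by linarith
  with assms(4) have "m * d * d \<le> (P + \<bar>Q\<bar>) * d" by (simp add: power2_eq_square algebra_simps)
  then have "m * d \<le> P + \<bar>Q\<bar>" using False by simp
  then have "d \<le> (P + \<bar>Q\<bar>) / m" using assms(1) by (simp add: field_simps)
  then show ?thesis by simp
qed

lemma ev_bounded:
  fixes x :: "nat \<Rightarrow> 'a::real_normed_vector"
  assumes "eventually (\<lambda>n. norm (x n) \<le> R) sequentially"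
  shows "\<exists>R'. \<forall>n. norm (x n) \<le> R'"
proof -
  obtain N where N: "\<And>n. n \<ge> N \<Longrightarrow> norm (x n) \<le> R" using assms unfolding eventually_sequentially by blast
  define R' where "R' = max R (Max ((\<lambda>n. norm (x n)) ` {..N}))"
  have "norm (x n) \<le> R'" for n
  proof (cases "n \<ge> N")
    case True then show ?thesis using N unfolding R'_def by fastforce
  next
    case False
    then have "norm (x n) \<le> Max ((\<lambda>n. norm (x n)) ` {..N})" by (intro Max_ge) auto
    then show ?thesis unfolding R'_def by linarith
  qed
  then show ?thesis by blast
qed

lemma subseq_conv:
  fixes x :: "nat \<Rightarrow> 'a::metric_space"
  assumes "\<And>r::nat\<Rightarrow>nat. strict_mono r \<Longrightarrow> \<exists>r'::nat\<Rightarrow>nat. strict_mono r' \<and> (x \<circ> r \<circ> r') \<longlonglongrightarrow> l"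
  shows "x \<longlonglongrightarrow> l"
proof (rule ccontr)
  assume "\<not> x \<longlonglongrightarrow> l"
  then obtain e where e: "e > 0" "\<not> eventually (\<lambda>n. dist (x n) l < e) sequentially"
    unfolding tendsto_iff by blast
  from freq_subseq[OF e(2)] obtain r :: "nat \<Rightarrow> nat" where r: "strict_mono r" "\<And>k. \<not> dist (x (r k)) l < e" by blast
  from assms[OF r(1)] obtain r' where r': "strict_mono r'" "(x \<circ> r \<circ> r') \<longlonglongrightarrow> l" by blast
  from tendstoD[OF r'(2) e(1)] obtain k where "dist ((x \<circ> r \<circ> r') k) l < e"
    by (meson eventually_happens' trivial_limit_sequentially)
  then show False using r(2)[of "r' k"] by simp
qed

lemma vi_rearr:
  assumes "solves_VI A g' \<phi> C u" "z \<in> C"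
  shows "blinfun_apply (A u) (u - z) \<le> blinfun_apply g' (u - z) + \<phi> z - \<phi> u"
proof -
  have "0 \<le> blinfun_apply (A u - g') (z - u) + \<phi> z - \<phi> u" using assms unfolding solves_VI_def by blast
  moreover have "blinfun_apply (A u - g') (z - u) = blinfun_apply g' (u - z) - blinfun_apply (A u) (u - z)"
    by (simp add: minus_blinfun.rep_eq blinfun.diff_right)
  ultimately show ?thesis by linarith
qed

lemma vi_unique:
  assumes sm: "strongly_monotone m A" and m: "m > 0"
    and u: "solves_VI A g' \<phi> C u" and v: "solves_VI A g' \<phi> C v"
  shows "u = v"
proof -
  have uC: "u \<in> C" and vC: "v \<in> C" using u v unfolding solves_VI_def by auto
  have 1: "blinfun_apply (A u) (u - v) \<le> blinfun_apply g' (u - v) + \<phi> v - \<phi> u" by (rule vi_rearr[OF u vC])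
  have 2: "blinfun_apply (A v) (v - u) \<le> blinfun_apply g' (v - u) + \<phi> u - \<phi> v" by (rule vi_rearr[OF v uC])
  have "blinfun_apply (A v) (v - u) = - blinfun_apply (A v) (u - v)" "blinfun_apply g' (v - u) = - blinfun_apply g' (u - v)"
    by (simp_all add: blinfun.diff_right)
  with 1 2 have "blinfun_apply (A u - A v) (u - v) \<le> 0" by (simp add: minus_blinfun.rep_eq)
  moreover have "m * (norm (u - v))\<^sup>2 \<le> blinfun_apply (A u - A v) (u - v)" using sm unfolding strongly_monotone_def by blast
  ultimately have "m * (norm (u - v))\<^sup>2 \<le> 0" by linarith
  then have "(norm (u - v))\<^sup>2 \<le> 0" using m by (simp add: mult_le_0_iff)
  then show ?thesis by simp
qed

lemma conv_main:
  fixes A :: "'a::banach \<Rightarrow> ('a \<Rightarrow>\<^sub>L real)"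
    and m :: real
    and E :: "'a set"
    and \<phi> :: "'a \<Rightarrow> real"
    and g :: "'a \<Rightarrow>\<^sub>L real"
    and En :: "nat \<Rightarrow> 'a set"
    and gn :: "nat \<Rightarrow> ('a \<Rightarrow>\<^sub>L real)"
  assumes refl: "reflexive_space TYPE('a)"
    and pm: "pseudomonotone A"
    and m_pos: "m > 0"
    and sm: "strongly_monotone m A"
    and phi_convex: "convex_on UNIV \<phi>"
    and phi_lsc: "lower_semicont \<phi>"
    and mosco: "mosco_conv En E"
    and gn: "gn \<longlonglongrightarrow> g"
    and un: "\<And>n. solves_VI A (gn n) \<phi> (En n) (un n)"
    and u: "solves_VI A g \<phi> E u"
  shows "un \<longlonglongrightarrow> u"
proof -
  have uE: "u \<in> E" using u unfolding solves_VI_def by blast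
  have unE: "un n \<in> En n" for n using un[of n] unfolding solves_VI_def by blast
  have recov: "\<exists>vs. (\<forall>n. vs n \<in> En n) \<and> vs \<longlonglongrightarrow> v" if "v \<in> E" for v
    using mosco that unfolding mosco_conv_def by blast
  have m1: "zl \<in> E" if "filterlim nk at_top sequentially" "\<And>k. z k \<in> En (nk k)" "weakly_conv z zl" for nk z zl
    using mosco that unfolding mosco_conv_def by blast
  obtain G where G: "\<And>n. norm (gn n) \<le> G"
    using convergent_imp_Bseq[of gn] gn unfolding Bseq_def convergent_def by auto
  obtain b where b: "b \<ge> 0" "\<And>x. \<phi> x \<ge> \<phi> 0 - b * norm x" using phi_lower_bound[OF phi_convex phi_lsc] by blast
  obtain zs where zs: "\<And>n. zs n \<in> En n" "zs \<longlonglongrightarrow> u" using recov[OF uE] by blast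
  obtain Zb where Zb: "\<And>n. norm (zs n) \<le> Zb"
    using convergent_imp_Bseq[of zs] zs(2) unfolding Bseq_def convergent_def by auto
  obtain Kz where Kz: "\<And>n. norm (A (zs n)) \<le> Kz" using pm_bounded[of A zs Zb] pm Zb by blast
  have G0: "G \<ge> 0" using G[of 0] norm_ge_zero[of "gn 0"] by linarith
  have Kz0: "Kz \<ge> 0" using Kz[of 0] norm_ge_zero[of "A (zs 0)"] by linarith
  define P where "P = G + Kz + b"
  define Q where "Q = \<phi> u + 1 - \<phi> 0 + b * Zb"
  define D where "D = 1 + (P + \<bar>Q\<bar>) / m"
  have "eventually (\<lambda>n. \<phi> (zs n) < \<phi> u + 1) sequentially"
    using phi_usc[OF phi_convex phi_lsc zs(2)] by simp
  then have "eventually (\<lambda>n. norm (un n) \<le> Zb + D) sequentially"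
  proof eventually_elim
    case (elim n)
    define d where "d = norm (un n - zs n)"
    have d0: "d \<ge> 0" unfolding d_def by simp
    have "m * d\<^sup>2 \<le> blinfun_apply (A (un n) - A (zs n)) (un n - zs n)"
      using sm unfolding strongly_monotone_def d_def by blast
    also have "\<dots> = blinfun_apply (A (un n)) (un n - zs n) - blinfun_apply (A (zs n)) (un n - zs n)"
      by (simp add: minus_blinfun.rep_eq)
    also have "\<dots> \<le> blinfun_apply (gn n) (un n - zs n) + \<phi> (zs n) - \<phi> (un n) - blinfun_apply (A (zs n)) (un n - zs n)"
      using vi_rearr[OF un[of n] zs(1)[of n]] by linarith
    also have "\<dots> \<le> G * d + (\<phi> u + 1) - (\<phi> 0 - b * (Zb + d)) + Kz * d"
    proof -
      have "blinfun_apply (gn n) (un n - zs n) \<le> G * d"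
        using blinfun_apply_bound[of "gn n" "un n - zs n"] G[of n] d0 unfolding d_def
        by (smt (verit) mult_right_mono)
      moreover have "- blinfun_apply (A (zs n)) (un n - zs n) \<le> Kz * d"
        using blinfun_apply_bound[of "A (zs n)" "un n - zs n"] Kz[of n] d0 unfolding d_def
        by (smt (verit) mult_right_mono)
      moreover have "norm (un n) \<le> Zb + d"
        using norm_triangle_ineq[of "zs n" "un n - zs n"] Zb[of n] unfolding d_def by simp
      then have "b * norm (un n) \<le> b * (Zb + d)" using b(1) by (rule mult_left_mono)
      then have "- \<phi> (un n) \<le> - (\<phi> 0 - b * (Zb + d))" using b(2)[of "un n"] by linarith
      ultimately show ?thesis using elim by linarith
    qed
    also have "\<dots> = P * d + Q" unfolding P_def Q_def by (simp add: algebra_simps)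
    finally have md: "m * d\<^sup>2 \<le> P * d + Q" .
    have P0: "P \<ge> 0" by (simp add: P_def G0 Kz0 b(1))
    have "d \<le> D" unfolding D_def by (rule quad_bound[OF m_pos P0 d0 md])
    moreover have "norm (un n) \<le> norm (zs n) + d"
      using norm_triangle_ineq[of "zs n" "un n - zs n"] unfolding d_def by simp
    ultimately show ?case using Zb[of n] by linarith
  qed
  from ev_bounded[OF this] obtain R where R: "\<And>n. norm (un n) \<le> R" by blast
  obtain K where K: "\<And>n. norm (A (un n)) \<le> K" using pm_bounded[of A un R] pm R by blast
  have K0: "K \<ge> 0" using K[of 0] norm_ge_zero[of "A (un 0)"] by linarith
  have R0: "R \<ge> 0" using R[of 0] norm_ge_zero[of "un 0"] by linarith
  have main: "\<exists>r'. strict_mono r' \<and> (un \<circ> r \<circ> r') \<longlonglongrightarrow> u" if r: "strict_mono r" for r :: "nat \<Rightarrow> nat"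
  proof -
    from weak_seq_compact[OF refl, of "un \<circ> r" R] R obtain r2 w where
      r2: "strict_mono r2" "weakly_conv (un \<circ> r \<circ> r2) w" by (auto simp: o_assoc)
    define s where "s = r \<circ> r2"
    have s: "strict_mono s" unfolding s_def using r r2(1) by (rule strict_mono_o)
    define x where "x k = un (s k)" for k
    have xeq: "x = un \<circ> r \<circ> r2" unfolding x_def s_def by (simp add: fun_eq_iff)
    have wx: "weakly_conv x w" using r2(2) unfolding xeq .
    have wE: "w \<in> E"
      by (rule m1[of s x]) (use filterlim_subseq[OF s] unE wx in \<open>auto simp: x_def\<close>)
    have star: "eventually (\<lambda>k. blinfun_apply (A (x k)) (x k - v) < blinfun_apply g (w - v) + \<phi> v - \<phi> w + e) sequentially"
      if vs: "\<And>n. vs n \<in> En n" "vs \<longlonglongrightarrow> v" and e: "e > 0" for v vs e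
    proof -
      define e4 where "e4 = e / 4"
      have e4: "e4 > 0" unfolding e4_def using e by simp
      have vss: "(\<lambda>k. vs (s k)) \<longlonglongrightarrow> v" using LIMSEQ_subseq_LIMSEQ[OF vs(2) s] by (simp add: o_def)
      have gns: "(\<lambda>k. gn (s k)) \<longlonglongrightarrow> g" using LIMSEQ_subseq_LIMSEQ[OF gn s] by (simp add: o_def)
      have T1: "eventually (\<lambda>k. \<bar>blinfun_apply (A (x k)) (vs (s k) - v)\<bar> < e4) sequentially"
      proof -
        have "eventually (\<lambda>k. dist (vs (s k)) v < e4 / (K + 1)) sequentially"
          using vss e4 K0 by (intro tendstoD) auto
        then show ?thesis
        proof eventually_elim
          case (elim k)
          have "\<bar>blinfun_apply (A (x k)) (vs (s k) - v)\<bar> \<le> norm (A (x k)) * norm (vs (s k) - v)"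
            by (rule blinfun_apply_bound)
          also have "\<dots> \<le> K * (e4 / (K + 1))"
            using K[of "s k"] elim K0 unfolding x_def by (intro mult_mono) (auto simp: dist_norm)
          also have "\<dots> = e4 * (K / (K + 1))" by simp
          also have "\<dots> < e4 * 1" using e4 K0 by (intro mult_strict_left_mono) auto
          finally show ?case by simp
        qed
      qed
      have T2l: "(\<lambda>k. blinfun_apply (gn (s k)) (x k - vs (s k))) \<longlonglongrightarrow> blinfun_apply g (w - v)"
      proof -
        have a: "(\<lambda>k. blinfun_apply (gn (s k) - g) (x k)) \<longlonglongrightarrow> 0"
        proof (rule Lim_null_comparison)
          show "eventually (\<lambda>k. norm (blinfun_apply (gn (s k) - g) (x k)) \<le> norm (gn (s k) - g) * R) sequentially"
          proof (rule always_eventually, rule allI)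
            fix k
            have "norm (blinfun_apply (gn (s k) - g) (x k)) \<le> norm (gn (s k) - g) * norm (x k)"
              using blinfun_apply_bound[of "gn (s k) - g" "x k"] by simp
            also have "\<dots> \<le> norm (gn (s k) - g) * R" using R unfolding x_def by (intro mult_left_mono) auto
            finally show "norm (blinfun_apply (gn (s k) - g) (x k)) \<le> norm (gn (s k) - g) * R" .
          qed
          have "(\<lambda>k. norm (gn (s k) - g)) \<longlonglongrightarrow> 0" using tendsto_norm_zero[OF LIM_zero[OF gns]] .
          from tendsto_mult_right_zero[OF this, of R] show "(\<lambda>k. norm (gn (s k) - g) * R) \<longlonglongrightarrow> 0"
            by (simp add: mult.commute)
        qed
        have bb: "(\<lambda>k. blinfun_apply g (x k)) \<longlonglongrightarrow> blinfun_apply g w" using wx unfolding weakly_conv_def by blast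
        have cc: "(\<lambda>k. blinfun_apply (gn (s k)) (vs (s k))) \<longlonglongrightarrow> blinfun_apply g v"
          by (rule blinfun.tendsto[OF gns vss])
        have "(\<lambda>k. blinfun_apply (gn (s k) - g) (x k) + blinfun_apply g (x k) - blinfun_apply (gn (s k)) (vs (s k)))
               \<longlonglongrightarrow> 0 + blinfun_apply g w - blinfun_apply g v"
          by (intro tendsto_intros a bb cc)
        moreover have "blinfun_apply (gn (s k) - g) (x k) + blinfun_apply g (x k) - blinfun_apply (gn (s k)) (vs (s k))
            = blinfun_apply (gn (s k)) (x k - vs (s k))" for k
          by (simp add: minus_blinfun.rep_eq blinfun.diff_right)
        moreover have "0 + blinfun_apply g w - blinfun_apply g v = blinfun_apply g (w - v)"
          by (simp add: blinfun.diff_right)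
        ultimately show ?thesis by simp
      qed
      have T2: "eventually (\<lambda>k. blinfun_apply (gn (s k)) (x k - vs (s k)) < blinfun_apply g (w - v) + e4) sequentially"
        using tendstoD[OF T2l e4] by eventually_elim (simp add: dist_real_def abs_less_iff)
      have T3: "eventually (\<lambda>k. \<phi> (vs (s k)) < \<phi> v + e4) sequentially"
        by (rule phi_usc[OF phi_convex phi_lsc vss e4])
      have T4: "eventually (\<lambda>k. \<phi> w - e4 < \<phi> (x k)) sequentially"
        by (rule weak_lsc[OF phi_convex phi_lsc wx e4])
      from T1 T2 T3 T4 show ?thesis
      proof eventually_elim
        case (elim k)
        have vi: "blinfun_apply (A (x k)) (x k - vs (s k)) \<le> blinfun_apply (gn (s k)) (x k - vs (s k)) + \<phi> (vs (s k)) - \<phi> (x k)"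
          unfolding x_def by (rule vi_rearr[OF un[of "s k"] vs(1)[of "s k"]])
        have split: "blinfun_apply (A (x k)) (x k - v) = blinfun_apply (A (x k)) (x k - vs (s k)) + blinfun_apply (A (x k)) (vs (s k) - v)"
          by (simp add: blinfun.diff_right)
        have "blinfun_apply (A (x k)) (vs (s k) - v) < e4" using elim(1) by (simp add: abs_less_iff)
        then show ?case using vi split elim(2,3,4) unfolding e4_def by linarith
      qed
    qed
    obtain ws where ws: "\<And>n. ws n \<in> En n" "ws \<longlonglongrightarrow> w" using recov[OF wE] by blast
    have pa: "eventually (\<lambda>k. blinfun_apply (A w) (w - v) - e < blinfun_apply (A (x k)) (x k - v)) sequentially"
      if "e > 0" for v e
    proof (rule pm_apply[OF pm wx _ that])
      fix e' :: real assume "e' > 0"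
      from star[OF ws this] show "eventually (\<lambda>k. blinfun_apply (A (x k)) (x k - w) < e') sequentially"
        by simp
    qed
    have wsol: "solves_VI A g \<phi> E w"
      unfolding solves_VI_def
    proof (intro conjI ballI)
      show "w \<in> E" by (rule wE)
      fix v assume vE: "v \<in> E"
      obtain vs where vs: "\<And>n. vs n \<in> En n" "vs \<longlonglongrightarrow> v" using recov[OF vE] by blast
      have twoe: "blinfun_apply (A w) (w - v) \<le> blinfun_apply g (w - v) + \<phi> v - \<phi> w + 2 * e" if e: "e > 0" for e
      proof -
        from pa[OF e, of v] star[OF vs e] have "eventually (\<lambda>k. blinfun_apply (A w) (w - v) - e < blinfun_apply g (w - v) + \<phi> v - \<phi> w + e) sequentially"
          by eventually_elim linarith
        then show ?thesis by (rule eventually_happens'[OF trivial_limit_sequentially, THEN exE]) auto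
      qed
      have "blinfun_apply (A w) (w - v) \<le> blinfun_apply g (w - v) + \<phi> v - \<phi> w"
      proof (rule field_le_epsilon)
        fix e :: real assume "e > 0"
        then have "e / 2 > 0" by simp
        from twoe[OF this] show "blinfun_apply (A w) (w - v) \<le> blinfun_apply g (w - v) + \<phi> v - \<phi> w + e"
          by simp
      qed
      moreover have "blinfun_apply (A w - g) (v - w) = blinfun_apply g (w - v) - blinfun_apply (A w) (w - v)"
        by (simp add: minus_blinfun.rep_eq blinfun.diff_right)
      ultimately show "0 \<le> blinfun_apply (A w - g) (v - w) + \<phi> v - \<phi> w" by linarith
    qed
    have wu: "w = u" by (rule vi_unique[OF sm m_pos wsol u])
    have "x \<longlonglongrightarrow> u"
    proof (rule tendstoI)
      fix \<epsilon> :: real assume \<epsilon>: "\<epsilon> > 0"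
      define e where "e = m * \<epsilon>\<^sup>2 / 4"
      have e: "e > 0" unfolding e_def using m_pos \<epsilon> by simp
      have ev1: "eventually (\<lambda>k. blinfun_apply (A (x k)) (x k - u) < e) sequentially"
        using star[OF zs e] wu by simp
      have "(\<lambda>k. blinfun_apply (A u) (x k)) \<longlonglongrightarrow> blinfun_apply (A u) u" using wx wu unfolding weakly_conv_def by blast
      then have "(\<lambda>k. blinfun_apply (A u) (x k - u)) \<longlonglongrightarrow> 0"
        using LIM_zero by (simp add: blinfun.diff_right)
      from tendstoD[OF this e] have ev2: "eventually (\<lambda>k. \<bar>blinfun_apply (A u) (x k - u)\<bar> < e) sequentially"
        by simp
      from ev1 ev2 show "eventually (\<lambda>k. dist (x k) u < \<epsilon>) sequentially"
      proof eventually_elim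
        case (elim k)
        have "m * (norm (x k - u))\<^sup>2 \<le> blinfun_apply (A (x k) - A u) (x k - u)"
          using sm unfolding strongly_monotone_def by blast
        also have "\<dots> = blinfun_apply (A (x k)) (x k - u) - blinfun_apply (A u) (x k - u)"
          by (simp add: minus_blinfun.rep_eq)
        also have "\<dots> < 2 * e" using elim by (simp add: abs_less_iff)
        finally have "m * (norm (x k - u))\<^sup>2 < m * (\<epsilon>\<^sup>2 / 2)" unfolding e_def by simp
        then have "(norm (x k - u))\<^sup>2 < \<epsilon>\<^sup>2 / 2" using m_pos by simp
        also have "\<dots> < \<epsilon>\<^sup>2" using \<epsilon> by simp
        finally have "(norm (x k - u))\<^sup>2 < \<epsilon>\<^sup>2" .
        then have "norm (x k - u) < \<epsilon>" using \<epsilon> by (simp add: power_less_imp_less_base)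
        then show ?case by (simp add: dist_norm)
      qed
    qed
    then show ?thesis using r2(1) unfolding xeq by blast
  qed
  show ?thesis by (rule subseq_conv) (rule main)
qed

theorem proposition1:
  fixes A :: "'a::banach \<Rightarrow> ('a \<Rightarrow>\<^sub>L real)"
    and m :: real
    and E :: "'a set"
    and \<phi> :: "'a \<Rightarrow> real"
    and g :: "'a \<Rightarrow>\<^sub>L real"
    and En :: "nat \<Rightarrow> 'a set"
    and gn :: "nat \<Rightarrow> ('a \<Rightarrow>\<^sub>L real)"
  assumes refl: "reflexive_space TYPE('a)"
    and pm: "pseudomonotone A"
    and m_pos: "m > 0"
    and sm: "strongly_monotone m A"
    and E: "E \<noteq> {}" "closed E" "convex E"
    and phi_convex: "convex_on UNIV \<phi>"
    and phi_lsc: "lower_semicont \<phi>"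
    and En: "\<And>n. En n \<noteq> {}" "\<And>n. closed (En n)" "\<And>n. convex (En n)"
    and mosco: "mosco_conv En E"
    and gn: "gn \<longlonglongrightarrow> g"
  shows "(\<forall>n. \<exists>!v. solves_VI A (gn n) \<phi> (En n) v)
       \<and> (\<exists>!v. solves_VI A g \<phi> E v)
       \<and> (\<forall>un u. (\<forall>n. solves_VI A (gn n) \<phi> (En n) (un n)) \<and> solves_VI A g \<phi> E u
                 \<longrightarrow> un \<longlonglongrightarrow> u)"
proof (intro conjI allI impI)
  fix n
  have "\<exists>v. solves_VI A (gn n) \<phi> (En n) v"
    using vi_exists[OF pm m_pos sm phi_convex phi_lsc refl En(2)[of n] En(3)[of n] En(1)[of n]] .
  then show "\<exists>!v. solves_VI A (gn n) \<phi> (En n) v"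
    using vi_unique[OF sm m_pos] by blast
next
  have "\<exists>v. solves_VI A g \<phi> E v"
    using vi_exists[OF pm m_pos sm phi_convex phi_lsc refl E(2) E(3) E(1)] .
  then show "\<exists>!v. solves_VI A g \<phi> E v"
    using vi_unique[OF sm m_pos] by blast
next
  fix un u
  assume "(\<forall>n. solves_VI A (gn n) \<phi> (En n) (un n)) \<and> solves_VI A g \<phi> E u"
  then show "un \<longlonglongrightarrow> u"
    using conv_main[OF refl pm m_pos sm phi_convex phi_lsc mosco gn] by blast
qed

end
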